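(* Let $M$ be a positive integer with $\omega(M)\geq 2828$. Then $W(M)<M^{1/13}$.
   Context: $\omega(M)$ is the number of distinct prime divisors of $M$ and $W(M)=2^{\omega(M)}$ is the number of square-free divisors of $M$. *)

theory Defs
  imports Complex_Main "HOL-Computational_Algebra.Primes"
begin

definition omega :: "nat \<Rightarrow> nat" where
  "omega M = card (prime_factors M)"

definition W :: "nat \<Rightarrow> nat" where
  "W M = 2 ^ omega M"

end

theory Submission
  imports Defs
begin
datatype ent = P | C nat nat

definition GG :: "nat list" where "GG = [6, 4, 2, 4, 2, 4, 6, 2]"

function run :: "nat \<Rightarrow> nat list \<Rightarrow> ent list \<Rightarrow> nat list \<Rightarrow> (nat \<times> nat list) option" where
  "run n gs [] ps = (if ps = [] then Some (n, gs) else None)"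
| "run n [] (x # es) ps = run n [6, 4, 2, 4, 2, 4, 6, 2] (x # es) ps"
| "run n (g # gs) (P # es) [] = None"
| "run n (g # gs) (P # es) (p # ps) = (if n = p then run (n + g) gs es ps else None)"
| "run n (g # gs) (C d e # es) ps =
     (if d * e = n \<and> 1 < d \<and> 1 < e then run (n + g) gs es ps else None)"
  by pat_completeness auto
termination
  by (relation "measure (\<lambda>(n, gs, es, ps). 2 * length es + (if gs = [] then 1 else 0))") auto

fun lb :: "nat list \<Rightarrow> nat \<Rightarrow> nat \<Rightarrow> nat \<times> nat" where
  "lb [] m e = (m, e)"
| "lb (p # ps) m e = (if 1152921504606846976 \<le> m * p then lb ps (m * p div 1048576) (e + 20)
     else lb ps (m * p) e)"
definition RR :: "nat list" where "RR = [1, 7, 11, 13, 17, 19, 23, 29]"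

definition good :: "nat \<Rightarrow> nat list \<Rightarrow> bool" where
  "good n gs \<longleftrightarrow> (\<exists>j<8. gs = drop j GG \<and> n mod 30 = RR ! j) \<or> (gs = [] \<and> n mod 30 = 1)"

definition cand :: "nat \<Rightarrow> bool" where
  "cand m \<longleftrightarrow> \<not> 2 dvd m \<and> \<not> 3 dvd m \<and> \<not> 5 dvd m"

lemma dvd30_shift:
  assumes "k dvd (30::nat)"
  shows "k dvd n + t \<longleftrightarrow> k dvd (n mod 30 + t)"
proof -
  have "n + t = 30 * (n div 30) + (n mod 30 + t)" by simp
  moreover have "k dvd 30 * (n div 30)" using assms by simp
  ultimately show ?thesis by (metis dvd_add_right_iff)
qed

lemma cand_shift: "cand (n + t) \<longleftrightarrow> cand (n mod 30 + t)"
  unfolding cand_def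
  using dvd30_shift[of 2 n t] dvd30_shift[of 3 n t] dvd30_shift[of 5 n t] by simp

lemma small_t: "0 < t \<Longrightarrow> t < (g::nat) \<Longrightarrow> g \<le> 6 \<Longrightarrow> t = 1 \<or> t = 2 \<or> t = 3 \<or> t = 4 \<or> t = 5"
  by arith

lemma good_reset: "good n [] \<Longrightarrow> good n [6, 4, 2, 4, 2, 4, 6, 2]"
  unfolding good_def GG_def RR_def
  by (auto simp: less_Suc_eq_0_disj) (rule exI[of _ 0], simp)

lemma good_step:
  assumes "good n (g # gs)"
  shows "good (n + g) gs \<and> 0 < g \<and> (\<forall>t. 0 < t \<and> t < g \<longrightarrow> \<not> cand (n + t))"
proof -
  obtain j where j: "j < 8" "g # gs = drop j GG" "n mod 30 = RR ! j"
    using assms unfolding good_def by auto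
  have m: "(n + g) mod 30 = (n mod 30 + g) mod 30" by (simp add: mod_add_left_eq)
  have "j = 0 \<or> j = 1 \<or> j = 2 \<or> j = 3 \<or> j = 4 \<or> j = 5 \<or> j = 6 \<or> j = 7" using j(1) by arith
  then show ?thesis
  proof (elim disjE)
    assume "j = 0"
    with j have g: "g = 6" "gs = drop 1 GG" "n mod 30 = 1" by (simp_all add: GG_def RR_def)
    show ?thesis using g m unfolding cand_shift[of n]
      by (auto simp: good_def RR_def cand_def dest!: small_t) (rule exI[of _ 1], simp)
  next
    assume "j = 1"
    with j have g: "g = 4" "gs = drop 2 GG" "n mod 30 = 7" by (simp_all add: GG_def RR_def)
    show ?thesis using g m unfolding cand_shift[of n]
      by (auto simp: good_def RR_def cand_def dest!: small_t) (rule exI[of _ 2], simp)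
  next
    assume "j = 2"
    with j have g: "g = 2" "gs = drop 3 GG" "n mod 30 = 11" by (simp_all add: GG_def RR_def)
    show ?thesis using g m unfolding cand_shift[of n]
      by (auto simp: good_def RR_def cand_def dest!: small_t) (rule exI[of _ 3], simp)
  next
    assume "j = 3"
    with j have g: "g = 4" "gs = drop 4 GG" "n mod 30 = 13" by (simp_all add: GG_def RR_def)
    show ?thesis using g m unfolding cand_shift[of n]
      by (auto simp: good_def RR_def cand_def dest!: small_t) (rule exI[of _ 4], simp)
  next
    assume "j = 4"
    with j have g: "g = 2" "gs = drop 5 GG" "n mod 30 = 17" by (simp_all add: GG_def RR_def)
    show ?thesis using g m unfolding cand_shift[of n]
      by (auto simp: good_def RR_def cand_def dest!: small_t) (rule exI[of _ 5], simp)
  next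
    assume "j = 5"
    with j have g: "g = 4" "gs = drop 6 GG" "n mod 30 = 19" by (simp_all add: GG_def RR_def)
    show ?thesis using g m unfolding cand_shift[of n]
      by (auto simp: good_def RR_def cand_def dest!: small_t) (rule exI[of _ 6], simp)
  next
    assume "j = 6"
    with j have g: "g = 6" "gs = drop 7 GG" "n mod 30 = 23" by (simp_all add: GG_def RR_def)
    show ?thesis using g m unfolding cand_shift[of n]
      by (auto simp: good_def RR_def cand_def dest!: small_t) (rule exI[of _ 7], simp)
  next
    assume "j = 7"
    with j have g: "g = 2" "gs = []" "n mod 30 = 29" by (simp_all add: GG_def RR_def)
    show ?thesis using g m unfolding cand_shift[of n]
      by (auto simp: good_def RR_def cand_def dest!: small_t)
  qed
qed

lemma mid_not_cand:
  assumes "\<forall>t. 0 < t \<and> t < g \<longrightarrow> \<not> cand (n + t)" "n < m" "m < n + (g::nat)"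
  shows "\<not> cand m"
proof -
  have "0 < m - n \<and> m - n < g" using assms(2,3) by linarith
  then have "\<not> cand (n + (m - n))" using assms(1) by blast
  moreover have "n + (m - n) = m" using assms(2) by linarith
  ultimately show ?thesis by simp
qed

lemma run_correct:
  "run n gs es ps = Some (n', gs') \<Longrightarrow> good n gs \<Longrightarrow>
     good n' gs' \<and> n \<le> n' \<and> (\<forall>p\<in>set ps. n \<le> p \<and> p < n') \<and> sorted_wrt (<) ps \<and>
     (\<forall>m. n \<le> m \<longrightarrow> m < n' \<longrightarrow> prime m \<longrightarrow> cand m \<longrightarrow> m \<in> set ps)"
proof (induction n gs es ps rule: run.induct)
  case (1 n gs ps)
  then show ?case by (auto split: if_splits)
next
  case (2 n x es ps)
  then show ?case using good_reset by simp
next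
  case (3 n g gs es)
  then show ?case by simp
next
  case (4 n g gs es p ps)
  have np: "n = p" using "4.prems"(1) by (simp split: if_splits)
  have r: "run (n + g) gs es ps = Some (n', gs')" using "4.prems"(1) np by simp
  from good_step[OF "4.prems"(2)] have st: "good (n + g) gs" "0 < g"
    "\<forall>t. 0 < t \<and> t < g \<longrightarrow> \<not> cand (n + t)" by auto
  have IH: "good n' gs' \<and> n + g \<le> n' \<and> (\<forall>p\<in>set ps. n + g \<le> p \<and> p < n') \<and> sorted_wrt (<) ps \<and>
     (\<forall>m. n + g \<le> m \<longrightarrow> m < n' \<longrightarrow> prime m \<longrightarrow> cand m \<longrightarrow> m \<in> set ps)"
    using "4.IH"[OF np r st(1)] .
  have m: "m \<in> set (p # ps)" if mn: "n \<le> m" "m < n'" "prime m" "cand m" for m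
  proof -
    consider "m = n" | "n < m \<and> m < n + g" | "n + g \<le> m" using mn(1) by linarith
    then show ?thesis
    proof cases
      case 1 then show ?thesis using np by simp
    next
      case 2 then show ?thesis using mid_not_cand[OF st(3)] mn(4) by blast
    next
      case 3
      then have "m \<in> set ps" using IH mn(2,3,4) by blast
      then show ?thesis by simp
    qed
  qed
  have A: "\<forall>q\<in>set (p # ps). n \<le> q \<and> q < n'" using IH np st(2) by auto
  have B: "sorted_wrt (<) (p # ps)"
  proof -
    have "\<forall>y\<in>set ps. p < y" using IH np st(2) by auto
    then show ?thesis using IH by simp
  qed
  have D: "n \<le> n'" using IH by simp
  show ?case using IH A B D m by blast
next
  case (5 n g gs d e es ps)
  have ne: "d * e = n" "1 < d" "1 < e" using "5.prems"(1) by (simp_all split: if_splits)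
  have r: "run (n + g) gs es ps = Some (n', gs')" using "5.prems"(1) ne by simp
  from good_step[OF "5.prems"(2)] have st: "good (n + g) gs" "0 < g"
    "\<forall>t. 0 < t \<and> t < g \<longrightarrow> \<not> cand (n + t)" by auto
  have IH: "good n' gs' \<and> n + g \<le> n' \<and> (\<forall>p\<in>set ps. n + g \<le> p \<and> p < n') \<and> sorted_wrt (<) ps \<and>
     (\<forall>m. n + g \<le> m \<longrightarrow> m < n' \<longrightarrow> prime m \<longrightarrow> cand m \<longrightarrow> m \<in> set ps)"
    using "5.IH"[OF conjI[OF ne(1) conjI[OF ne(2) ne(3)]] r st(1)] .
  have np: "\<not> prime n" using ne prime_product[of d e] by auto
  have m: "m \<in> set ps" if mn: "n \<le> m" "m < n'" "prime m" "cand m" for m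
  proof -
    consider "m = n" | "n < m \<and> m < n + g" | "n + g \<le> m" using mn(1) by linarith
    then show ?thesis
    proof cases
      case 1 then show ?thesis using np mn(3) by simp
    next
      case 2 then show ?thesis using mid_not_cand[OF st(3)] mn(4) by blast
    next
      case 3 then show ?thesis using IH mn(2,3,4) by blast
    qed
  qed
  have A: "\<forall>q\<in>set ps. n \<le> q \<and> q < n'" using IH by auto
  have D: "n \<le> n'" using IH by simp
  show ?case using IH A D m by blast
qed

fun chain :: "nat \<Rightarrow> nat list \<Rightarrow> (ent list \<times> nat list) list \<Rightarrow> (nat \<times> nat list) option" where
  "chain n gs [] = Some (n, gs)"
| "chain n gs ((es, ps) # cs) = (case run n gs es ps of None \<Rightarrow> None | Some (n', gs') \<Rightarrow> chain n' gs' cs)"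

lemma chain_correct:
  "chain n gs cs = Some (n', gs') \<Longrightarrow> good n gs \<Longrightarrow>
     n \<le> n' \<and> (\<forall>p\<in>set (concat (map snd cs)). n \<le> p \<and> p < n') \<and> sorted_wrt (<) (concat (map snd cs)) \<and>
     (\<forall>m. n \<le> m \<longrightarrow> m < n' \<longrightarrow> prime m \<longrightarrow> cand m \<longrightarrow> m \<in> set (concat (map snd cs)))"
proof (induction n gs cs rule: chain.induct)
  case (1 n gs)
  then show ?case by simp
next
  case (2 n gs es ps cs)
  obtain n1 gs1 where r: "run n gs es ps = Some (n1, gs1)"
    using "2.prems"(1) by (cases "run n gs es ps") auto
  have c: "chain n1 gs1 cs = Some (n', gs')" using "2.prems"(1) r by simp
  note R = run_correct[OF r "2.prems"(2)]
  have R1: "good n1 gs1" using R by (rule conjunct1)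
  have R2: "n \<le> n1" using R by blast
  have R3: "\<forall>p\<in>set ps. n \<le> p \<and> p < n1" using R by blast
  have R4: "sorted_wrt (<) ps" using R by blast
  have R5: "\<forall>m. n \<le> m \<longrightarrow> m < n1 \<longrightarrow> prime m \<longrightarrow> cand m \<longrightarrow> m \<in> set ps" using R by blast
  let ?L = "concat (map snd cs)"
  note IH = "2.IH"[OF r refl c R1]
  have I2: "n1 \<le> n'" using IH by blast
  have I3: "\<forall>p\<in>set ?L. n1 \<le> p \<and> p < n'" using IH by blast
  have I4: "sorted_wrt (<) ?L" using IH by blast
  have I5: "\<forall>m. n1 \<le> m \<longrightarrow> m < n' \<longrightarrow> prime m \<longrightarrow> cand m \<longrightarrow> m \<in> set ?L" using IH by blast
  have e: "concat (map snd ((es, ps) # cs)) = ps @ ?L" by simp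
  have m: "m \<in> set (ps @ ?L)" if mn: "n \<le> m" "m < n'" "prime m" "cand m" for m
  proof (cases "m < n1")
    case True then have "m \<in> set ps" using R5 mn(1,3,4) by blast
    then show ?thesis by simp
  next
    case False then have "n1 \<le> m" by simp
    then have "m \<in> set ?L" using I5 mn(2,3,4) by blast
    then show ?thesis by simp
  qed
  have s: "sorted_wrt (<) (ps @ ?L)"
  proof -
    have "\<forall>x\<in>set ps. \<forall>y\<in>set ?L. x < y"
    proof (intro ballI)
      fix x y assume xy: "x \<in> set ps" "y \<in> set ?L"
      have "x < n1" using R3 xy(1) by blast
      moreover have "n1 \<le> y" using I3 xy(2) by blast
      ultimately show "x < y" by simp
    qed
    then show ?thesis unfolding sorted_wrt_append using R4 I4 by blast
  qed
  have A: "\<forall>p\<in>set (ps @ ?L). n \<le> p \<and> p < n'"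
  proof
    fix p assume "p \<in> set (ps @ ?L)"
    then consider "p \<in> set ps" | "p \<in> set ?L" by auto
    then show "n \<le> p \<and> p < n'"
    proof cases
      case 1
      then have "n \<le> p \<and> p < n1" using R3 by blast
      then show ?thesis using I2 by simp
    next
      case 2
      then have "n1 \<le> p \<and> p < n'" using I3 by blast
      then show ?thesis using R2 by simp
    qed
  qed
  have D: "n \<le> n'" using R2 I2 by simp
  show ?case unfolding e using A D s m by blast
qed
lemma lb_correct:
  "lb ps m e = (m', e') \<Longrightarrow> m' * 2 ^ e' \<le> m * 2 ^ e * prod_list ps"
proof (induction ps m e rule: lb.induct)
  case (1 m e)
  then show ?case by simp
next
  case (2 p ps m e)
  show ?case
  proof (cases "1152921504606846976 \<le> m * p")
    case True
    with "2.prems" have r: "lb ps (m * p div 1048576) (e + 20) = (m', e')" by simp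
    have "m' * 2 ^ e' \<le> (m * p div 1048576) * 2 ^ (e + 20) * prod_list ps"
      using "2.IH"(1)[OF True r] .
    also have "(m * p div 1048576) * 2 ^ (e + 20) = ((m * p div 2 ^ 20) * 2 ^ 20) * 2 ^ e"
      by (simp add: power_add)
    also have "\<dots> \<le> (m * p) * 2 ^ e"
    proof -
      have "(m * p div 2 ^ 20) * 2 ^ 20 \<le> m * p" by (metis div_mult_mod_eq le_add1)
      then show ?thesis by (rule mult_right_mono) simp
    qed
    finally show ?thesis by (simp add: algebra_simps mult_right_mono)
  next
    case False
    with "2.prems" have r: "lb ps (m * p) e = (m', e')" by simp
    show ?thesis using "2.IH"(2)[OF False r] by (simp add: algebra_simps)
  qed
qed

lemma lb_append: "lb (xs @ ys) m e = (case lb xs m e of (m', e') \<Rightarrow> lb ys m' e')"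
  by (induction xs m e rule: lb.induct) auto

lemma prod_bound_general:
  fixes S T :: "nat set" and K Y c :: nat
  assumes fT: "finite T" and cT: "card T = K"
    and allp: "\<And>p. prime p \<Longrightarrow> p \<le> Y \<Longrightarrow> p \<in> T"
    and Tle: "\<And>x. x \<in> T \<Longrightarrow> x \<le> Y"
    and cY: "1 \<le> c" "c \<le> Y + 1"
    and Tprod: "c ^ K < prod (\<lambda>x. x) T"
    and fS: "finite S" and pS: "\<And>p. p \<in> S \<Longrightarrow> prime p" and kS: "K \<le> card S"
  shows "c ^ card S < prod (\<lambda>x. x) S"
proof -
  define A where "A = S \<inter> T"
  define B where "B = S - T"
  define d where "d = card S - K"
  have fA: "finite A" and fB: "finite B" using fS by (auto simp: A_def B_def)
  have AT: "A \<subseteq> T" by (auto simp: A_def)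
  have cA: "card A \<le> K" using card_mono[OF fT AT] cT by simp
  have SAB: "S = A \<union> B" and dAB: "A \<inter> B = {}" by (auto simp: A_def B_def)
  have cS: "card S = card A + card B"
    using card_Un_disjoint[OF fA fB dAB] SAB by simp
  have cTA: "card (T - A) = K - card A"
    using card_Diff_subset[OF finite_subset[OF AT fT] AT] cT by simp
  have cB: "card B = card (T - A) + d" using cS cTA cA kS by (simp add: d_def)
  have pSdecomp: "prod (\<lambda>x. x) S = prod (\<lambda>x. x) A * prod (\<lambda>x. x) B"
    using prod.union_disjoint[OF fA fB dAB] SAB by simp
  have pTdecomp: "prod (\<lambda>x. x) T = prod (\<lambda>x. x) A * prod (\<lambda>x. x) (T - A)"
    using prod.subset_diff[OF AT fT, of "\<lambda>x. x"] by (simp add: mult.commute)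
  have Bbig: "Y + 1 \<le> b" if "b \<in> B" for b
  proof -
    have pb: "prime b" "b \<notin> T" using that pS by (auto simp: B_def)
    show ?thesis
    proof (rule ccontr)
      assume "\<not> Y + 1 \<le> b"
      then have "b \<le> Y" by simp
      then have "b \<in> T" using allp \<open>prime b\<close> by blast
      then show False using \<open>b \<notin> T\<close> by blast
    qed
  qed
  have pB: "(Y + 1) ^ card B \<le> prod (\<lambda>x. x) B"
  proof -
    have "(\<Prod>x\<in>B. Y + 1) \<le> prod (\<lambda>x. x) B"
      by (rule prod_mono) (use Bbig in auto)
    then show ?thesis by simp
  qed
  have pTA: "prod (\<lambda>x. x) (T - A) \<le> (Y + 1) ^ card (T - A)"
    by (rule prod_le_power) (use Tle in force)+
  have "c ^ card S = c ^ K * c ^ d" using kS by (simp add: d_def flip: power_add)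
  also have "\<dots> < prod (\<lambda>x. x) T * c ^ d"
    using Tprod cY(1) by (intro mult_strict_right_mono) simp_all
  also have "\<dots> = prod (\<lambda>x. x) A * (prod (\<lambda>x. x) (T - A) * c ^ d)"
    using pTdecomp by simp
  also have "\<dots> \<le> prod (\<lambda>x. x) A * ((Y + 1) ^ card (T - A) * (Y + 1) ^ d)"
    using pTA power_mono[OF cY(2), of d] by (intro mult_left_mono mult_mono) simp_all
  also have "\<dots> = prod (\<lambda>x. x) A * (Y + 1) ^ card B"
    using cB by (simp add: power_add)
  also have "\<dots> \<le> prod (\<lambda>x. x) A * prod (\<lambda>x. x) B"
    using pB by (intro mult_left_mono) simp_all
  also have "\<dots> = prod (\<lambda>x. x) S" using pSdecomp by simp
  finally show ?thesis .
qed

lemma prod_prime_factors_le: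
  fixes M :: nat
  assumes "M > 0"
  shows "prod (\<lambda>x. x) (prime_factors M) \<le> M"
proof -
  have "prod (\<lambda>x. x) (prime_factors M) \<le> (\<Prod>p\<in>prime_factors M. p ^ multiplicity p M)"
  proof (rule prod_mono)
    fix p assume p: "p \<in> prime_factors M"
    then have "multiplicity p M > 0" "prime p" by (auto simp: prime_factors_multiplicity)
    then have "p ^ 1 \<le> p ^ multiplicity p M"
      by (intro power_increasing) (auto simp: prime_gt_0_nat Suc_leI)
    then show "0 \<le> p \<and> p \<le> p ^ multiplicity p M" by simp
  qed
  also have "\<dots> = M" using prod_prime_factors[of M] assms by simp
  finally show ?thesis .
qed

lemma final_step:
  fixes M k :: nat
  assumes "(8192::nat) ^ k < M"
  shows "real (2 ^ k) < real M powr (1/13)"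
proof -
  have e: "(8192::nat) ^ k = (2 ^ k) ^ 13"
  proof -
    have "(8192::nat) = 2 ^ 13" by simp
    then have "(8192::nat) ^ k = (2 ^ 13) ^ k" by simp
    also have "\<dots> = (2 ^ k) ^ 13" by (simp only: power_mult[symmetric] mult.commute)
    finally show ?thesis .
  qed
  have "real ((2 ^ k) ^ 13) < real M" using assms e by (metis of_nat_less_iff)
  then have lt: "(real (2 ^ k)) ^ 13 < real M" by simp
  have pos: "0 < real (2 ^ k)" by simp
  have "real (2 ^ k) = ((real (2 ^ k)) ^ 13) powr (1/13)"
    using pos by (simp add: powr_realpow[symmetric] powr_powr)
  also have "\<dots> < real M powr (1/13)"
    using lt pos by (intro powr_less_mono2) simp_all
  finally show ?thesis .
qed
definition E0 :: "ent list" where "E0 = [P, P, P, P, P, P, P, P, P, P, P, P, C 7 7, P, P, P, P, P, P, C 7 11, P, P, P, C 7 13, P, P, P, P, P, P, C 7 17, C 11 11, P, P, C 7 19, P, P, C 11 13, P, P, P, C 7 23, P, P, C 13 13, P, P, P, C 11 17, P, P, P, P, C 7 29, C 11 19, P, C 7 31, C 13 17, P, P, P, P, P, P, C 13 19, P, C 11 23, P, C 7 37, P, P, P, P, P, P, C 7 41, C 17 17, P, C 13 23, C 7 43, P, P, P, P, C 11 29, C 17 19, C 7 47, P, P, C 11 31, C 7 49, P, P, P, P, C 19 19, P, C 7 53, P, C 13 29]"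
definition Q0 :: "nat list" where "Q0 = [7, 11, 13, 17, 19, 23, 29, 31, 37, 41, 43, 47, 53, 59, 61, 67, 71, 73, 79, 83, 89, 97, 101, 103, 107, 109, 113, 127, 131, 137, 139, 149, 151, 157, 163, 167, 173, 179, 181, 191, 193, 197, 199, 211, 223, 227, 229, 233, 239, 241, 251, 257, 263, 269, 271, 277, 281, 283, 293, 307, 311, 313, 317, 331, 337, 347, 349, 353, 359, 367, 373]"
lemma run0: "run 7 [4, 2, 4, 2, 4, 6, 2] E0 Q0 = Some (379, [4, 6, 2])"
  by (simp add: E0_def Q0_def)
lemma lb0: "lb Q0 30 0 = (1524036256006, 460)"
  by (simp add: Q0_def)
lemma len0: "length Q0 = 71"
  by (simp add: Q0_def)

definition E1 :: "ent list" where "E1 = [P, P, P, C 17 23, P, P, C 13 31, C 11 37, P, C 7 59, P, P, C 7 61, P, P, C 19 23, P, P, P, C 11 41, P, P, P, P, C 7 67, C 11 43, P, C 13 37, P, P, C 17 29, C 7 71, P, P, P, C 7 73, C 11 47, P, P, C 17 31, C 23 23, C 13 41, C 7 77, P, P, C 19 29, C 7 79, P, C 13 43, P, P, P, P, C 7 83, C 11 53, P, C 19 31, P, P, P, P, C 13 47, P, P, P, C 7 89, C 17 37, P, C 7 91, P, P, P, C 11 59, P, P, P, C 23 29, C 11 61, P, P, C 7 97, P, C 13 53, P, C 17 41, P, C 19 37, C 7 101, P, C 23 31, P, C 7 103, P, C 17 43, P, C 11 67, P, P, C 7 107, P]"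
definition Q1 :: "nat list" where "Q1 = [379, 383, 389, 397, 401, 409, 419, 421, 431, 433, 439, 443, 449, 457, 461, 463, 467, 479, 487, 491, 499, 503, 509, 521, 523, 541, 547, 557, 563, 569, 571, 577, 587, 593, 599, 601, 607, 613, 617, 619, 631, 641, 643, 647, 653, 659, 661, 673, 677, 683, 691, 701, 709, 719, 727, 733, 739, 743, 751]"
lemma run1: "run 379 [4, 6, 2] E1 Q1 = Some (757, [4, 2, 4, 2, 4, 6, 2])"
  by (simp add: E1_def Q1_def)
lemma lb1: "lb Q1 1524036256006 460 = (213406294365663259, 980)"
  by (simp add: Q1_def)
lemma len1: "length Q1 = 59"
  by (simp add: Q1_def)

definition E2 :: "ent list" where "E2 = [P, P, C 7 109, C 13 59, P, P, C 19 41, C 11 71, P, C 7 113, C 13 61, P, C 17 47, C 11 73, P, P, C 19 43, P, P, P, P, C 7 119, P, C 29 29, C 7 121, C 23 37, P, P, P, P, C 11 79, C 13 67, P, P, P, P, C 7 127, C 19 47, C 29 31, C 17 53, P, P, C 11 83, C 7 131, P, C 13 71, P, C 7 133, P, P, C 23 41, P, C 13 73, P, C 7 137, C 31 31, P, P, C 7 139, P, C 11 89, P, C 23 43, P, P, C 7 143, C 17 59, C 19 53, P, P, P, P, C 13 79, P, P, C 17 61, P, C 7 149, P, P, C 7 151, P, P, C 11 97, P, C 29 37, C 13 83, C 23 47, P, P, P, P, C 7 157, P, P, C 11 101, P, C 19 59, P, C 7 161]"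
definition Q2 :: "nat list" where "Q2 = [757, 761, 769, 773, 787, 797, 809, 811, 821, 823, 827, 829, 839, 853, 857, 859, 863, 877, 881, 883, 887, 907, 911, 919, 929, 937, 941, 947, 953, 967, 971, 977, 983, 991, 997, 1009, 1013, 1019, 1021, 1031, 1033, 1039, 1049, 1051, 1061, 1063, 1069, 1087, 1091, 1093, 1097, 1103, 1109, 1117, 1123]"
lemma run2: "run 757 [4, 2, 4, 2, 4, 6, 2] E2 Q2 = Some (1129, [4, 6, 2])"
  by (simp add: E2_def Q2_def)
lemma lb2: "lb Q2 213406294365663259 980 = (1733601872056, 1540)"
  by (simp add: Q2_def)
lemma len2: "length Q2 = 55"
  by (simp add: Q2_def)

definition E3 :: "ent list" where "E3 = [P, C 11 103, C 17 67, C 7 163, C 31 37, P, P, C 13 89, C 19 61, P, C 7 167, P, C 11 107, P, C 7 169, P, C 29 41, P, C 11 109, P, C 17 71, C 7 173, P, P, C 23 53, P, P, P, P, C 17 73, C 11 113, C 29 43, P, C 7 179, P, C 13 97, C 7 181, C 31 41, C 19 67, P, P, P, P, P, P, P, P, P, C 7 187, C 13 101, P, P, P, C 11 121, C 31 43, C 7 191, C 13 103, C 17 79, C 19 71, C 7 193, C 23 59, P, C 29 47, P, C 37 37, P, C 7 197, P, C 19 73, C 13 107, C 7 199, C 11 127, P, C 23 61, P, C 17 83, C 13 109, C 7 203, P, P, P, P, P, C 11 131, P, P, P, C 31 47, P, C 7 209, C 13 113, P, C 7 211, P, P, P, P, P, P, C 19 79]"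
definition Q3 :: "nat list" where "Q3 = [1129, 1151, 1153, 1163, 1171, 1181, 1187, 1193, 1201, 1213, 1217, 1223, 1229, 1231, 1237, 1249, 1259, 1277, 1279, 1283, 1289, 1291, 1297, 1301, 1303, 1307, 1319, 1321, 1327, 1361, 1367, 1373, 1381, 1399, 1409, 1423, 1427, 1429, 1433, 1439, 1447, 1451, 1453, 1459, 1471, 1481, 1483, 1487, 1489, 1493, 1499]"
lemma run3: "run 1129 [4, 6, 2] E3 Q3 = Some (1507, [4, 2, 4, 2, 4, 6, 2])"
  by (simp add: E3_def Q3_def)
lemma lb3: "lb Q3 1733601872056 1540 = (755544538254402, 2060)"
  by (simp add: Q3_def)
lemma len3: "length Q3 = 51"
  by (simp add: Q3_def)

definition E4 :: "ent list" where "E4 = [C 11 137, P, C 17 89, C 37 41, C 7 217, P, C 11 139, P, C 29 53, C 23 67, P, C 7 221, P, P, P, C 7 223, P, P, C 11 143, C 19 83, P, P, C 7 227, C 37 43, P, P, C 7 229, P, P, P, P, P, P, C 7 233, C 23 71, P, C 11 149, C 31 53, C 17 97, C 13 127, P, C 11 151, P, P, P, C 7 239, C 23 73, C 41 41, C 7 241, C 19 89, P, P, P, C 13 131, P, C 29 59, C 17 101, P, P, C 11 157, C 7 247, P, C 37 47, P, P, C 17 103, P, C 7 251, P, C 41 43, C 29 61, C 7 253, P, C 13 137, P, P, P, C 11 163, C 7 257, P, C 13 139, P, C 7 259, C 23 79, C 17 107, P, C 31 59, P, C 11 167, C 7 263, C 19 97, P, C 43 43, C 17 109, C 11 169, P,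 P, P, P, P]"
definition Q4 :: "nat list" where "Q4 = [1511, 1523, 1531, 1543, 1549, 1553, 1559, 1567, 1571, 1579, 1583, 1597, 1601, 1607, 1609, 1613, 1619, 1621, 1627, 1637, 1657, 1663, 1667, 1669, 1693, 1697, 1699, 1709, 1721, 1723, 1733, 1741, 1747, 1753, 1759, 1777, 1783, 1787, 1789, 1801, 1811, 1823, 1831, 1847, 1861, 1867, 1871, 1873, 1877]"
lemma run4: "run 1507 [4, 2, 4, 2, 4, 6, 2] E4 Q4 = Some (1879, [4, 6, 2])"
  by (simp add: E4_def Q4_def)
lemma lb4: "lb Q4 755544538254402 2060 = (29533369527093605, 2580)"
  by (simp add: Q4_def)
lemma len4: "length Q4 = 49"
  by (simp add: Q4_def)

definition E5 :: "ent list" where "E5 = [P, C 7 269, P, C 31 61, C 7 271, P, C 11 173, P, C 23 83, P, C 19 101, C 17 113, C 41 47, P, P, C 13 149, C 7 277, C 29 67, P, P, C 19 103, C 37 53, C 13 151, C 7 281, C 11 179, P, P, C 7 283, P, C 11 181, P, P, P, P, C 7 287, P, P, C 43 47, C 7 289, P, P, C 19 107, P, C 13 157, C 23 89, C 7 293, P, C 11 187, C 29 71, P, P, C 19 109, C 31 67, P, P, P, P, C 7 299, P, C 11 191, C 7 301, P, P, C 29 73, C 13 163, C 11 193, P, P, P, P, P, C 19 113, C 7 307, P, C 17 127, P, C 11 197, C 13 167, C 41 53, C 7 311, P, C 37 59, C 11 199, C 7 313, C 13 169, C 31 71, P, P, C 47 47, P, C 7 317, P, C 17 131, C 23 97, C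 7 319, P, P, P, C 13 173, P]"
definition Q5 :: "nat list" where "Q5 = [1879, 1889, 1901, 1907, 1913, 1931, 1933, 1949, 1951, 1973, 1979, 1987, 1993, 1997, 1999, 2003, 2011, 2017, 2027, 2029, 2039, 2053, 2063, 2069, 2081, 2083, 2087, 2089, 2099, 2111, 2113, 2129, 2131, 2137, 2141, 2143, 2153, 2161, 2179, 2203, 2207, 2213, 2221, 2237, 2239, 2243, 2251]"
lemma run5: "run 1879 [4, 6, 2] E5 Q5 = Some (2257, [4, 2, 4, 2, 4, 6, 2])"
  by (simp add: E5_def Q5_def)
lemma lb5: "lb Q5 29533369527093605 2580 = (5342285283693795, 3100)"
  by (simp add: Q5_def)
lemma len5: "length Q5 = 47"
  by (simp add: Q5_def)

definition E6 :: "ent list" where "E6 = [C 37 61, C 7 323, C 31 73, P, P, P, C 43 53, P, P, C 29 79, P, P, C 11 209, C 7 329, P, P, C 7 331, C 11 211, C 23 101, C 13 179, C 17 137, P, P, P, P, P, C 13 181, P, C 7 337, C 17 139, C 23 103, P, P, P, P, C 7 341, P, P, P, C 7 343, C 29 83, P, C 19 127, P, C 41 59, P, C 7 347, C 11 221, P, P, C 7 349, P, C 31 79, C 11 223, P, C 23 107, P, C 7 353, P, P, C 37 67, C 13 191, C 19 131, C 47 53, C 11 227, C 41 61, P, C 23 109, C 13 193, C 7 359, C 11 229, P, C 7 361, P, C 17 149, C 43 59, P, P, P, P, P, C 13 197, C 11 233, C 17 151, C 7 367, C 31 83, P, C 29 89, C 13 199, P, P, C 7 371, C 23 113, C 19 137,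 P, C 7 373, P, P, C 43 61, C 37 71]"
definition Q6 :: "nat list" where "Q6 = [2267, 2269, 2273, 2281, 2287, 2293, 2297, 2309, 2311, 2333, 2339, 2341, 2347, 2351, 2357, 2371, 2377, 2381, 2383, 2389, 2393, 2399, 2411, 2417, 2423, 2437, 2441, 2447, 2459, 2467, 2473, 2477, 2503, 2521, 2531, 2539, 2543, 2549, 2551, 2557, 2579, 2591, 2593, 2609, 2617, 2621]"
lemma run6: "run 2257 [4, 2, 4, 2, 4, 6, 2] E6 Q6 = Some (2629, [4, 6, 2])"
  by (simp add: E6_def Q6_def)
lemma lb6: "lb Q6 5342285283693795 3100 = (789358842449317, 3620)"
  by (simp add: Q6_def)
lemma len6: "length Q6 = 46"
  by (simp add: Q6_def)

definition E7 :: "ent list" where "E7 = [C 11 239, P, C 7 377, C 19 139, P, C 11 241, C 7 379, P, P, P, C 17 157, P, P, C 7 383, P, P, P, P, P, C 37 73, P, P, P, C 11 247, P, C 7 389, P, P, C 7 391, P, C 13 211, C 41 67, P, P, C 31 89, C 11 251, P, C 17 163, C 47 59, P, C 7 397, C 11 253, P, P, P, P, P, C 7 401, C 53 53, C 29 97, P, C 7 403, C 11 257, C 19 149, P, P, C 17 167, P, C 7 407, P, P, P, C 7 409, C 47 61, C 19 151, C 13 221, P, C 43 67, P, C 7 413, C 11 263, P, C 13 223, P, P, C 41 71, P, C 23 127, C 37 79, P, C 29 101, C 7 419, P, C 17 173, C 7 421, C 13 227, P, P, C 11 269, P, P, P, C 13 229, C 11 271, C 19 157, C 29 103, C 7 427,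 C 41 73, P, P]"
definition Q7 :: "nat list" where "Q7 = [2633, 2647, 2657, 2659, 2663, 2671, 2677, 2683, 2687, 2689, 2693, 2699, 2707, 2711, 2713, 2719, 2729, 2731, 2741, 2749, 2753, 2767, 2777, 2789, 2791, 2797, 2801, 2803, 2819, 2833, 2837, 2843, 2851, 2857, 2861, 2879, 2887, 2897, 2903, 2909, 2917, 2927, 2939, 2953, 2957, 2963, 2969, 2971, 2999, 3001]"
lemma run7: "run 2629 [4, 6, 2] E7 Q7 = Some (3007, [4, 2, 4, 2, 4, 6, 2])"
  by (simp add: E7_def Q7_def)
lemma lb7: "lb Q7 789358842449317 3620 = (4557313277956, 4200)"
  by (simp add: Q7_def)
lemma len7: "length Q7 = 50"
  by (simp add: Q7_def)

definition E8 :: "ent list" where "E8 = [C 31 97, P, C 23 131, C 7 431, P, P, C 13 233, C 7 433, P, P, C 17 179, C 11 277, P, C 43 71, C 7 437, P, P, C 37 83, C 7 439, C 17 181, P, P, P, C 11 281, C 19 163, C 7 443, C 29 107, C 13 239, P, C 11 283, P, P, C 53 59, C 31 101, C 13 241, P, C 43 73, C 7 449, C 47 67, C 23 137, C 7 451, C 29 109, P, P, P, C 19 167, C 11 289, P, P, P, C 31 103, C 23 139, C 7 457, P, P, C 13 247, P, P, C 11 293, C 7 461, P, C 53 61, C 41 79, C 7 463, C 17 191, P, P, P, P, C 13 251, C 7 467, P, C 29 113, C 17 193, C 7 469, C 19 173, C 11 299, C 37 89, P, P, P, C 7 473, P, C 31 107, P, P, P, P, C 47 71, C 13 257, P, P,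 C 17 197, C 7 479, P, P, C 7 481, P, P, C 11 307]"
definition Q8 :: "nat list" where "Q8 = [3011, 3019, 3023, 3037, 3041, 3049, 3061, 3067, 3079, 3083, 3089, 3109, 3119, 3121, 3137, 3163, 3167, 3169, 3181, 3187, 3191, 3203, 3209, 3217, 3221, 3229, 3251, 3253, 3257, 3259, 3271, 3299, 3301, 3307, 3313, 3319, 3323, 3329, 3331, 3343, 3347, 3359, 3361, 3371, 3373]"
lemma run8: "run 3007 [4, 2, 4, 2, 4, 6, 2] E8 Q8 = Some (3379, [4, 6, 2])"
  by (simp add: E8_def Q8_def)
lemma lb8: "lb Q8 4557313277956 4200 = (72976294446738, 4720)"
  by (simp add: Q8_def)
lemma len8: "length Q8 = 45"
  by (simp add: Q8_def)

definition E9 :: "ent list" where "E9 = [C 31 109, C 17 199, P, P, C 43 79, C 19 179, C 41 83, P, C 7 487, P, C 13 263, C 11 311, C 23 149, C 47 73, P, C 7 491, C 19 181, C 11 313, P, C 7 493, P, P, P, P, P, C 23 151, C 7 497, C 59 59, C 11 317, P, C 7 499, C 13 269, P, C 31 113, C 11 319, P, P, C 7 503, C 13 271, P, P, P, P, P, P, C 53 67, C 11 323, P, P, C 7 509, C 43 83, P, C 7 511, P, P, C 17 211, C 37 97, P, C 59 61, C 13 277, P, C 23 157, P, P, C 7 517, P, C 19 191, P, P, C 11 331, P, C 7 521, C 41 89, C 13 281, P, C 7 523, C 19 193, P, P, P, C 13 283, C 29 127, C 7 527, P, P, P, C 7 529, C 11 337, P, C 47 79, P, C 61 61, P, C 7 533,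 P, C 37 101, P, C 19 197, C 23 163, C 11 341]"
definition Q9 :: "nat list" where "Q9 = [3389, 3391, 3407, 3413, 3433, 3449, 3457, 3461, 3463, 3467, 3469, 3491, 3499, 3511, 3517, 3527, 3529, 3533, 3539, 3541, 3547, 3557, 3559, 3571, 3581, 3583, 3593, 3607, 3613, 3617, 3623, 3631, 3637, 3643, 3659, 3671, 3673, 3677, 3691, 3697, 3701, 3709, 3719, 3727, 3733, 3739]"
lemma run9: "run 3379 [4, 6, 2] E9 Q9 = Some (3757, [4, 2, 4, 2, 4, 6, 2])"
  by (simp add: E9_def Q9_def)
lemma lb9: "lb Q9 72976294446738 4720 = (530561181242731, 5260)"
  by (simp add: Q9_def)
lemma len9: "length Q9 = 46"
  by (simp add: Q9_def)

definition E10 :: "ent list" where "E10 = [C 13 289, P, C 53 71, P, P, C 7 539, P, C 19 199, C 7 541, C 17 223, P, P, C 29 131, P, C 13 293, C 37 103, C 11 347, P, P, C 43 89, C 7 547, P, C 11 349, C 23 167, P, P, P, C 7 551, C 17 227, P, C 53 73, C 7 553, P, P, C 11 353, C 13 299, P, C 17 229, C 7 557, C 47 83, P, P, C 7 559, P, P, P, P, P, C 31 127, C 7 563, P, P, C 11 359, C 59 67, C 37 107, C 17 233, P, C 11 361, C 29 137, C 41 97, C 23 173, C 7 569, P, C 13 307, C 7 571, P, P, P, C 19 211, P, P, P, P, C 29 139, C 37 109, C 11 367, C 7 577, C 13 311, P, P, P, C 31 131, C 17 239, C 7 581, C 13 313, P, P, C 7 583, C 61 67, P, P, C 17 241, P,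 C 11 373, C 7 587, P, C 23 179, C 13 317, C 7 589, P]"
definition Q10 :: "nat list" where "Q10 = [3761, 3767, 3769, 3779, 3793, 3797, 3803, 3821, 3823, 3833, 3847, 3851, 3853, 3863, 3877, 3881, 3889, 3907, 3911, 3917, 3919, 3923, 3929, 3931, 3943, 3947, 3967, 3989, 4001, 4003, 4007, 4013, 4019, 4021, 4027, 4049, 4051, 4057, 4073, 4079, 4091, 4093, 4099, 4111, 4127]"
lemma run10: "run 3757 [4, 2, 4, 2, 4, 6, 2] E10 Q10 = Some (4129, [4, 6, 2])"
  by (simp add: E10_def Q10_def)
lemma lb10: "lb Q10 530561181242731 5260 = (88895687297858, 5800)"
  by (simp add: Q10_def)
lemma len10: "length Q10 = 45"
  by (simp add: Q10_def)

definition E11 :: "ent list" where "E11 = [P, P, P, C 41 101, C 11 377, C 7 593, P, P, P, C 23 181, C 11 379, C 43 97, P, C 37 113, C 47 89, C 53 79, C 59 71, C 7 599, C 13 323, P, C 7 601, P, C 11 383, P, P, C 41 103, P, P, C 19 223, P, P, C 31 137, C 7 607, P, P, P, C 17 251, P, P, C 7 611, C 11 389, P, P, C 7 613, P, C 11 391, C 13 331, C 59 73, C 31 139, C 19 227, C 7 617, C 29 149, P, C 61 71, C 7 619, P, P, C 43 101, P, C 19 229, P, C 7 623, P, C 11 397, C 17 257, P, C 29 151, C 13 337, C 41 107, P, C 23 191, P, C 53 83, C 7 629, P, C 11 401, C 7 631, P, P, C 19 233, C 43 103, C 11 403, C 23 193, P, P, P, C 61 73, P, C 7 637, P, C 41 109,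 C 17 263, C 11 407, P, P, C 7 641, C 67 67, P, C 11 409, C 7 643]"
definition Q11 :: "nat list" where "Q11 = [4129, 4133, 4139, 4153, 4157, 4159, 4177, 4201, 4211, 4217, 4219, 4229, 4231, 4241, 4243, 4253, 4259, 4261, 4271, 4273, 4283, 4289, 4297, 4327, 4337, 4339, 4349, 4357, 4363, 4373, 4391, 4397, 4409, 4421, 4423, 4441, 4447, 4451, 4457, 4463, 4481, 4483, 4493]"
lemma run11: "run 4129 [4, 6, 2] E11 Q11 = Some (4507, [4, 2, 4, 2, 4, 6, 2])"
  by (simp add: E11_def Q11_def)
lemma lb11: "lb Q11 88895687297858 5800 = (47803948804486, 6320)"
  by (simp add: Q11_def)
lemma len11: "length Q11 = 43"
  by (simp add: Q11_def)

definition E12 :: "ent list" where "E12 = [P, C 13 347, P, P, P, P, C 7 647, C 23 197, C 13 349, C 19 239, C 7 649, P, P, C 29 157, C 47 97, P, P, C 7 653, C 17 269, C 23 199, C 19 241, P, C 13 353, P, P, C 43 107, P, C 17 271, C 11 419, C 7 659, C 31 149, P, C 7 661, C 11 421, C 41 113, P, P, P, P, P, P, C 59 79, P, C 13 359, C 7 667, P, P, C 31 151, C 43 109, P, C 13 361, C 7 671, C 37 127, P, C 17 277, C 7 673, C 53 89, P, P, C 29 163, P, P, C 7 677, C 11 431, C 47 101, P, C 7 679, C 67 71, P, C 11 433, C 19 251, C 13 367, C 17 281, C 7 683, P, P, P, P, P, P, C 11 437, C 17 283, P, P, C 61 79, C 7 689, C 11 439, P, C 7 691, C 47 103, C 29 167,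 C 37 131, C 13 373, C 23 211, C 43 113, P, C 31 157, P, C 11 443, P]"
definition Q12 :: "nat list" where "Q12 = [4507, 4513, 4517, 4519, 4523, 4547, 4549, 4561, 4567, 4583, 4591, 4597, 4603, 4621, 4637, 4639, 4643, 4649, 4651, 4657, 4663, 4673, 4679, 4691, 4703, 4721, 4723, 4729, 4733, 4751, 4759, 4783, 4787, 4789, 4793, 4799, 4801, 4813, 4817, 4831, 4861, 4871, 4877]"
lemma run12: "run 4507 [4, 2, 4, 2, 4, 6, 2] E12 Q12 = Some (4879, [4, 6, 2])"
  by (simp add: E12_def Q12_def)
lemma lb12: "lb Q12 47803948804486 6320 = (926805327220111, 6840)"
  by (simp add: Q12_def)
lemma len12: "length Q12 = 43"
  by (simp add: Q12_def)

definition E13 :: "ent list" where "E13 = [C 7 697, C 19 257, P, C 67 73, C 59 83, C 13 377, P, C 7 701, P, C 17 289, P, C 7 703, C 13 379, P, P, P, C 11 449, P, C 7 707, P, P, C 11 451, C 7 709, P, P, P, C 13 383, C 17 293, P, C 7 713, P, C 19 263, P, P, P, P, C 29 173, P, P, C 11 457, C 47 107, C 7 719, P, C 71 71, C 7 721, P, C 31 163, C 13 389, P, C 61 83, C 37 137, C 11 461, P, P, C 13 391, P, C 7 727, C 11 463, P, P, P, C 19 269, P, C 7 731, P, C 47 109, C 23 223, C 7 733, C 11 467, C 53 97, C 37 139, P, C 19 271, P, C 7 737, C 13 397, P, P, C 7 739, C 31 167, P, C 71 73, P, C 29 179, P, C 7 743, C 11 473, C 41 127, P, C 13 401, C 17 307,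 C 23 227, P, P, P, P, C 13 403, C 7 749, C 29 181, C 59 89]"
definition Q13 :: "nat list" where "Q13 = [4889, 4903, 4909, 4919, 4931, 4933, 4937, 4943, 4951, 4957, 4967, 4969, 4973, 4987, 4993, 4999, 5003, 5009, 5011, 5021, 5023, 5039, 5051, 5059, 5077, 5081, 5087, 5099, 5101, 5107, 5113, 5119, 5147, 5153, 5167, 5171, 5179, 5189, 5197, 5209, 5227, 5231, 5233, 5237]"
lemma run13: "run 4879 [4, 6, 2] E13 Q13 = Some (5257, [4, 2, 4, 2, 4, 6, 2])"
  by (simp add: E13_def Q13_def)
lemma lb13: "lb Q13 926805327220111 6840 = (2384434985777066, 7380)"
  by (simp add: Q13_def)
lemma len13: "length Q13 = 44"
  by (simp add: Q13_def)

definition E14 :: "ent list" where "E14 = [C 7 751, P, C 19 277, C 23 229, C 11 479, P, P, P, C 17 311, C 11 481, C 67 79, P, C 7 757, P, P, C 47 113, C 13 409, C 17 313, P, C 7 761, C 73 73, P, C 19 281, C 7 763, P, P, C 53 101, C 11 487, C 23 233, C 31 173, C 7 767, C 41 131, C 19 283, P, C 7 769, P, C 17 317, P, P, C 11 491, P, C 7 773, P, P, P, C 11 493, C 61 89, P, P, P, P, C 13 419, P, C 7 779, C 53 103, C 43 127, C 7 781, P, C 13 421, P, P, P, C 11 499, C 17 323, C 23 239, P, P, P, C 7 787, C 37 149, P, P, P, P, C 11 503, C 7 791, C 29 191, C 23 241, C 31 179, C 7 793, P, C 67 83, P, C 19 293, P, P, C 7 797, P, C 37 151, P, C 7 799, C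 29 193, C 11 509, C 13 431, C 71 79, C 31 181, C 41 137, C 7 803, P, C 17 331]"
definition Q14 :: "nat list" where "Q14 = [5261, 5273, 5279, 5281, 5297, 5303, 5309, 5323, 5333, 5347, 5351, 5381, 5387, 5393, 5399, 5407, 5413, 5417, 5419, 5431, 5437, 5441, 5443, 5449, 5471, 5477, 5479, 5483, 5501, 5503, 5507, 5519, 5521, 5527, 5531, 5557, 5563, 5569, 5573, 5581, 5591, 5623]"
lemma run14: "run 5257 [4, 2, 4, 2, 4, 6, 2] E14 Q14 = Some (5629, [4, 6, 2])"
  by (simp add: E14_def Q14_def)
lemma lb14: "lb Q14 2384434985777066 7380 = (5291271816261200, 7900)"
  by (simp add: Q14_def)
lemma len14: "length Q14 = 42"
  by (simp add: Q14_def)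

definition E15 :: "ent list" where "E15 = [C 13 433, C 43 131, P, P, P, P, P, P, P, C 7 809, P, C 53 107, C 7 811, C 13 437, P, C 11 517, P, P, C 41 139, P, C 13 439, P, C 29 197, P, C 7 817, C 59 97, C 17 337, C 11 521, P, P, P, C 7 821, P, C 11 523, C 13 443, C 7 823, C 73 79, C 29 199, C 23 251, C 53 109, P, P, C 7 827, P, C 11 527, P, C 7 829, P, C 37 157, P, C 11 529, P, P, C 7 833, C 19 307, C 13 449, P, P, P, P, P, P, C 11 533, P, P, C 7 839, P, P, C 7 841, C 43 137, C 71 83, P, C 17 347, P, C 19 311, C 23 257, C 61 97, C 31 191, P, P, C 7 847, C 17 349, P, C 13 457, C 19 313, C 11 541, P, C 7 851, C 59 101, C 67 89, C 47 127, C 7 853, C 43 139, P, C 31 193, P, C 53 113, C 13 461, C 7 857, C 17 353]"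
definition Q15 :: "nat list" where "Q15 = [5639, 5641, 5647, 5651, 5653, 5657, 5659, 5669, 5683, 5689, 5693, 5701, 5711, 5717, 5737, 5741, 5743, 5749, 5779, 5783, 5791, 5801, 5807, 5813, 5821, 5827, 5839, 5843, 5849, 5851, 5857, 5861, 5867, 5869, 5879, 5881, 5897, 5903, 5923, 5927, 5939, 5953, 5981, 5987]"
lemma run15: "run 5629 [4, 6, 2] E15 Q15 = Some (6007, [4, 2, 4, 2, 4, 6, 2])"
  by (simp add: E15_def Q15_def)
lemma lb15: "lb Q15 5291271816261200 7900 = (5161816719615, 8460)"
  by (simp add: Q15_def)
lemma len15: "length Q15 = 44"
  by (simp add: Q15_def)

definition E16 :: "ent list" where "E16 = [P, P, C 7 859, C 11 547, C 13 463, C 19 317, P, C 37 163, P, C 7 863, P, P, C 23 263, P, C 73 83, C 11 551, P, C 13 467, P, C 59 103, P, C 7 869, P, P, C 7 871, P, C 17 359, C 31 197, C 41 149, P, C 29 211, P, C 11 557, P, P, C 17 361, C 7 877, P, C 11 559, P, C 47 131, C 61 101, P, C 7 881, C 31 199, P, C 37 167, C 7 883, C 23 269, C 41 151, C 11 563, P, P, P, C 7 887, P, P, P, C 7 889, C 13 479, P, C 23 271, C 17 367, C 79 79, P, C 7 893, C 13 481, P, C 11 569, P, P, P, P, C 11 571, C 61 103, P, C 19 331, C 7 899, P, P, C 7 901, P, C 59 107, P, C 71 89, P, P, C 13 487, P, C 17 373, P, C 11 577, C 7 907, P, P, P, P, C 23 277, P, C 7 911]"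
definition Q16 :: "nat list" where "Q16 = [6007, 6011, 6029, 6037, 6043, 6047, 6053, 6067, 6073, 6079, 6089, 6091, 6101, 6113, 6121, 6131, 6133, 6143, 6151, 6163, 6173, 6197, 6199, 6203, 6211, 6217, 6221, 6229, 6247, 6257, 6263, 6269, 6271, 6277, 6287, 6299, 6301, 6311, 6317, 6323, 6329, 6337, 6343, 6353, 6359, 6361, 6367, 6373]"
lemma run16: "run 6007 [4, 2, 4, 2, 4, 6, 2] E16 Q16 = Some (6379, [4, 6, 2])"
  by (simp add: E16_def Q16_def)
lemma lb16: "lb Q16 5161816719615 8460 = (133215653376220, 9060)"
  by (simp add: Q16_def)
lemma len16: "length Q16 = 48"
  by (simp add: Q16_def)

definition E17 :: "ent list" where "E17 = [P, C 13 491, P, C 7 913, P, C 37 173, C 19 337, C 43 149, C 13 493, C 11 583, C 7 917, P, P, C 59 109, C 7 919, C 41 157, C 47 137, C 17 379, P, P, C 11 587, C 7 923, C 23 281, C 29 223, P, P, C 11 589, P, C 13 499, P, C 43 151, C 73 89, C 67 97, C 7 929, C 23 283, C 17 383, C 7 931, P, C 11 593, C 61 107, P, C 47 139, C 13 503, C 31 211, P, P, P, C 79 83, C 7 937, P, P, P, P, P, C 29 227, C 7 941, C 11 599, C 19 347, P, C 7 943, P, C 11 601, C 17 389, C 13 509, P, C 37 179, C 7 947, C 19 349, P, C 29 229, C 7 949, C 17 391, C 61 109, P, P, P, C 59 113, C 7 953, P, C 11 607, P, C 41 163, P, P, C 37 181, P, P, C 19 353, P, C 7 959, P, C 11 611,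 C 7 961, C 53 127, P, P, C 23 293, C 11 613, C 17 397, C 43 157]"
definition Q17 :: "nat list" where "Q17 = [6379, 6389, 6397, 6421, 6427, 6449, 6451, 6469, 6473, 6481, 6491, 6521, 6529, 6547, 6551, 6553, 6563, 6569, 6571, 6577, 6581, 6599, 6607, 6619, 6637, 6653, 6659, 6661, 6673, 6679, 6689, 6691, 6701, 6703, 6709, 6719, 6733, 6737]"
lemma run17: "run 6379 [4, 6, 2] E17 Q17 = Some (6757, [4, 2, 4, 2, 4, 6, 2])"
  by (simp add: E17_def Q17_def)
lemma lb17: "lb Q17 133215653376220 9060 = (511203282867492, 9540)"
  by (simp add: Q17_def)
lemma len17: "length Q17 = 38"
  by (simp add: Q17_def)

definition E18 :: "ent list" where "E18 = [C 29 233, P, P, C 67 101, C 7 967, C 13 521, P, P, C 11 617, P, P, C 7 971, C 13 523, P, C 11 619, C 7 973, C 17 401, C 19 359, P, P, P, P, C 7 977, P, C 41 167, C 13 527, C 7 979, P, C 19 361, P, P, P, C 13 529, C 7 983, P, C 71 97, C 83 83, C 61 113, P, C 67 103, P, P, C 31 223, P, C 11 629, C 7 989, C 13 533, C 29 239, C 7 991, C 11 631, C 53 131, P, P, C 17 409, P, P, P, P, C 19 367, P, C 7 997, P, C 29 241, P, P, P, C 47 149, C 7 1001, C 43 163, P, P, C 7 1003, P, C 79 89, C 13 541, C 31 227, P, P, C 7 1007, C 11 641, P, C 23 307, C 7 1009, C 37 191, P, C 11 643, P, C 73 97, C 19 373, C 7 1013, C 41 173, C 47 151, C 31 229, P, P,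 C 13 547, C 11 647, P, C 17 419, P]"
definition Q18 :: "nat list" where "Q18 = [6761, 6763, 6779, 6781, 6791, 6793, 6803, 6823, 6827, 6829, 6833, 6841, 6857, 6863, 6869, 6871, 6883, 6899, 6907, 6911, 6917, 6947, 6949, 6959, 6961, 6967, 6971, 6977, 6983, 6991, 6997, 7001, 7013, 7019, 7027, 7039, 7043, 7057, 7069, 7079, 7103, 7109, 7121, 7127]"
lemma run18: "run 6757 [4, 2, 4, 2, 4, 6, 2] E18 Q18 = Some (7129, [4, 6, 2])"
  by (simp add: E18_def Q18_def)
lemma lb18: "lb Q18 511203282867492 9540 = (1360615444944110, 10100)"
  by (simp add: Q18_def)
lemma len18: "length Q18 = 44"
  by (simp add: Q18_def)

definition E19 :: "ent list" where "E19 = [P, C 7 1019, C 11 649, C 37 193, C 7 1021, P, C 23 311, C 17 421, P, C 13 551, C 67 107, C 71 101, P, C 43 167, C 11 653, P, C 7 1027, P, C 23 313, C 19 379, P, P, P, C 7 1031, P, C 31 233, P, C 7 1033, P, C 13 557, P, P, C 11 659, P, C 7 1037, C 53 137, C 13 559, C 11 661, C 7 1039, C 19 383, C 29 251, P, C 37 197, C 23 317, P, C 7 1043, C 67 109, P, P, C 71 103, C 13 563, P, C 17 431, P, P, C 11 667, C 41 179, C 7 1049, P, P, C 7 1051, C 17 433, C 37 199, C 53 139, P, C 73 101, C 47 157, C 11 671, C 83 89, C 19 389, P, C 13 569, C 7 1057, C 11 673, C 31 239, P, P, C 41 181, C 13 571, C 7 1061, C 17 437, P, C 43 173, C 7 1063,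 C 11 677, P, C 29 257, P, P, C 17 439, C 7 1067, C 31 241, P, P, C 7 1069, P, P, C 59 127, P, C 13 577]"
definition Q19 :: "nat list" where "Q19 = [7129, 7151, 7159, 7177, 7187, 7193, 7207, 7211, 7213, 7219, 7229, 7237, 7243, 7247, 7253, 7283, 7297, 7307, 7309, 7321, 7331, 7333, 7349, 7351, 7369, 7393, 7411, 7417, 7433, 7451, 7457, 7459, 7477, 7481, 7487, 7489, 7499]"
lemma run19: "run 7129 [4, 6, 2] E19 Q19 = Some (7507, [4, 2, 4, 2, 4, 6, 2])"
  by (simp add: E19_def Q19_def)
lemma lb19: "lb Q19 1360615444944110 10100 = (41646802025021, 10580)"
  by (simp add: Q19_def)
lemma len19: "length Q19 = 37"
  by (simp add: Q19_def)

definition E20 :: "ent list" where "E20 = [P, C 7 1073, C 11 683, P, C 73 103, P, P, C 17 443, P, P, C 19 397, P, P, C 7 1079, P, P, C 7 1081, C 67 113, P, P, C 11 689, P, P, P, C 71 107, C 11 691, P, P, C 7 1087, C 23 331, C 19 401, P, C 29 263, C 13 587, C 17 449, C 7 1091, P, P, P, C 7 1093, C 13 589, C 47 163, C 79 97, C 11 697, P, P, C 7 1097, P, P, P, C 7 1099, C 43 179, P, P, C 13 593, C 11 701, P, C 7 1103, P, P, C 59 131, C 11 703, C 71 109, P, C 61 127, C 23 337, P, P, P, C 7 1109, C 17 457, C 19 409, C 7 1111, C 31 251, C 43 181, C 13 599, P, P, C 11 709, C 29 269, C 37 211, C 73 107, C 13 601, P, C 7 1117, P, P, C 41 191, C 17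 461, P, C 11 713, C 7 1121, C 47 167, P, C 29 271, C 7 1123, P, C 17 463, P, P]"
definition Q20 :: "nat list" where "Q20 = [7507, 7517, 7523, 7529, 7537, 7541, 7547, 7549, 7559, 7561, 7573, 7577, 7583, 7589, 7591, 7603, 7607, 7621, 7639, 7643, 7649, 7669, 7673, 7681, 7687, 7691, 7699, 7703, 7717, 7723, 7727, 7741, 7753, 7757, 7759, 7789, 7793, 7817, 7823, 7829, 7841, 7853, 7867, 7873, 7877]"
lemma run20: "run 7507 [4, 2, 4, 2, 4, 6, 2] E20 Q20 = Some (7879, [4, 6, 2])"
  by (simp add: E20_def Q20_def)
lemma lb20: "lb Q20 41646802025021 10580 = (70689420796320, 11160)"
  by (simp add: Q20_def)
lemma len20: "length Q20 = 45"
  by (simp add: Q20_def)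

definition E21 :: "ent list" where "E21 = [P, P, C 7 1127, C 13 607, C 53 149, P, C 7 1129, P, C 11 719, C 41 193, P, C 89 89, P, C 7 1133, P, P, C 17 467, C 13 611, P, P, C 73 109, C 19 419, P, C 31 257, C 13 613, C 7 1139, C 79 101, C 23 347, C 7 1141, C 61 131, P, C 11 727, C 19 421, C 53 151, P, P, P, C 13 617, C 71 113, C 23 349, C 7 1147, C 29 277, P, C 11 731, C 13 619, C 83 97, P, C 7 1151, P, C 11 733, P, C 7 1153, C 41 197, P, C 59 137, P, P, P, C 7 1157, P, C 11 737, P, C 7 1159, P, C 23 353, P, C 11 739, C 47 173, C 79 103, C 7 1163, C 17 479, P, C 29 281, C 31 263, C 41 199, P, P, P, C 11 743, C 13 629, P, C 7 1169, C 19 431, P, C 7 1171, C 59 139, C 13 631, C 29 283, P, C 43 191, P, P, C 19 433, P, P, P, C 7 1177, P, C 73 113, C 37 223]"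
definition Q21 :: "nat list" where "Q21 = [7879, 7883, 7901, 7907, 7919, 7927, 7933, 7937, 7949, 7951, 7963, 7993, 8009, 8011, 8017, 8039, 8053, 8059, 8069, 8081, 8087, 8089, 8093, 8101, 8111, 8117, 8123, 8147, 8161, 8167, 8171, 8179, 8191, 8209, 8219, 8221, 8231, 8233, 8237, 8243]"
lemma run21: "run 7879 [4, 6, 2] E21 Q21 = Some (8257, [4, 2, 4, 2, 4, 6, 2])"
  by (simp add: E21_def Q21_def)
lemma lb21: "lb Q21 70689420796320 11160 = (38684888420311, 11680)"
  by (simp add: Q21_def)
lemma len21: "length Q21 = 40"
  by (simp add: Q21_def)

definition E22 :: "ent list" where "E22 = [C 23 359, C 11 751, P, C 7 1181, P, P, C 17 487, C 7 1183, P, P, P, P, C 43 193, C 19 437, C 7 1187, P, P, C 53 157, C 7 1189, C 11 757, P, C 13 641, C 31 269, C 19 439, C 17 491, C 7 1193, P, C 61 137, C 13 643, P, P, C 11 761, P, C 17 493, C 83 101, P, P, C 7 1199, C 37 227, C 31 271, C 7 1201, C 13 647, C 47 179, C 19 443, P, P, P, P, C 11 767, C 23 367, P, P, C 7 1207, C 79 107, C 11 769, P, P, C 43 197, C 37 229, C 7 1211, C 61 139, C 17 499, C 13 653, C 7 1213, C 29 293, P, C 11 773, C 47 181, C 67 127, P, C 7 1217, P, P, C 19 449, C 7 1219, P, P, P, C 83 103, C 17 503, C 43 199, C 7 1223, P, C 13 659, C 11 779, P, C 23 373, P, C 31 277, C 11 781, C 13 661, P, P, C 7 1229, P, C 79 109,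 C 7 1231, C 37 233, P, P]"
definition Q22 :: "nat list" where "Q22 = [8263, 8269, 8273, 8287, 8291, 8293, 8297, 8311, 8317, 8329, 8353, 8363, 8369, 8377, 8387, 8389, 8419, 8423, 8429, 8431, 8443, 8447, 8461, 8467, 8501, 8513, 8521, 8527, 8537, 8539, 8543, 8563, 8573, 8581, 8597, 8599, 8609, 8623, 8627]"
lemma run22: "run 8257 [4, 2, 4, 2, 4, 6, 2] E22 Q22 = Some (8629, [4, 6, 2])"
  by (simp add: E22_def Q22_def)
lemma lb22: "lb Q22 38684888420311 11680 = (15753905934946290, 12180)"
  by (simp add: Q22_def)
lemma len22: "length Q22 = 39"
  by (simp add: Q22_def)

definition E23 :: "ent list" where "E23 = [P, C 89 97, C 53 163, P, P, C 41 211, C 17 509, C 11 787, C 7 1237, P, P, C 13 667, P, P, C 19 457, C 7 1241, P, P, P, C 7 1243, P, C 31 281, P, C 23 379, P, C 11 793, C 7 1247, P, P, P, C 7 1249, P, C 13 673, P, C 19 461, P, C 11 797, C 7 1253, C 31 283, C 67 131, P, P, C 11 799, C 59 149, C 19 463, C 13 677, P, P, C 23 383, C 7 1259, P, P, C 7 1261, P, C 11 803, P, P, C 37 239, P, C 53 167, C 17 521, P, P, P, C 7 1267, C 19 467, C 13 683, C 83 107, P, C 17 523, P, C 7 1271, C 11 809, C 29 307, C 59 151, C 7 1273, C 37 241, C 11 811, P, C 79 113, P, P, C 7 1277, P, C 23 389, P, C 7 1279, C 13 689, C 17 527, P, P, P, C 47 191, C 7 1283, C 13 691, C 11 817, C 89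 101, C 17 529, P, P]"
definition Q23 :: "nat list" where "Q23 = [8629, 8641, 8647, 8663, 8669, 8677, 8681, 8689, 8693, 8699, 8707, 8713, 8719, 8731, 8737, 8741, 8747, 8753, 8761, 8779, 8783, 8803, 8807, 8819, 8821, 8831, 8837, 8839, 8849, 8861, 8863, 8867, 8887, 8893, 8923, 8929, 8933, 8941, 8951, 8963, 8969, 8971, 8999, 9001]"
lemma run23: "run 8629 [4, 6, 2] E23 Q23 = Some (9007, [4, 2, 4, 2, 4, 6, 2])"
  by (simp add: E23_def Q23_def)
lemma lb23: "lb Q23 15753905934946290 12180 = (1467093568343547, 12760)"
  by (simp add: Q23_def)
lemma len23: "length Q23 = 44"
  by (simp add: Q23_def)

definition E24 :: "ent list" where "E24 = [P, P, P, C 71 127, C 29 311, C 7 1289, P, C 11 821, C 7 1291, P, P, C 83 109, P, C 11 823, P, C 13 697, P, C 47 193, C 43 211, C 29 313, C 7 1297, C 31 293, C 61 149, P, C 11 827, C 19 479, P, C 7 1301, P, C 13 701, C 11 829, C 7 1303, P, C 23 397, P, P, C 13 703, C 41 223, C 7 1307, P, P, P, C 7 1309, C 89 103, C 53 173, P, C 67 137, P, P, C 7 1313, C 29 317, C 17 541, P, P, P, C 61 151, C 13 709, P, C 23 401, P, C 11 839, C 7 1319, P, P, C 7 1321, C 11 841, C 19 487, P, C 47 197, C 59 157, C 13 713, C 73 127, P, P, P, C 37 251, C 7 1327, P, C 17 547, C 71 131, C 41 227, P, C 67 139, C 7 1331, P, P, C 19 491, C 7 1333, P, P, P, C 13 719,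 P, C 47 199, C 7 1337, C 11 851, C 17 551, P, C 7 1339, P]"
definition Q24 :: "nat list" where "Q24 = [9007, 9011, 9013, 9029, 9041, 9043, 9049, 9059, 9067, 9091, 9103, 9109, 9127, 9133, 9137, 9151, 9157, 9161, 9173, 9181, 9187, 9199, 9203, 9209, 9221, 9227, 9239, 9241, 9257, 9277, 9281, 9283, 9293, 9311, 9319, 9323, 9337, 9341, 9343, 9349, 9371, 9377]"
lemma run24: "run 9007 [4, 2, 4, 2, 4, 6, 2] E24 Q24 = Some (9379, [4, 6, 2])"
  by (simp add: E24_def Q24_def)
lemma lb24: "lb Q24 1467093568343547 12760 = (11218969248645, 13320)"
  by (simp add: Q24_def)
lemma len24: "length Q24 = 42"
  by (simp add: Q24_def)

definition E25 :: "ent list" where "E25 = [C 83 113, C 11 853, C 41 229, P, P, C 7 1343, P, C 23 409, C 97 97, P, P, P, C 11 857, P, P, P, P, C 7 1349, C 11 859, C 13 727, C 7 1351, P, P, P, C 17 557, P, P, C 19 499, C 53 179, P, C 11 863, P, C 7 1357, C 13 731, C 37 257, P, C 31 307, P, C 89 107, C 7 1361, C 13 733, P, P, C 7 1363, P, P, C 41 233, C 19 503, C 11 869, C 73 131, C 7 1367, C 17 563, C 61 157, C 11 871, C 7 1369, P, C 43 223, C 53 181, C 29 331, P, C 13 739, C 7 1373, P, C 59 163, P, P, P, P, C 23 419, C 31 311, P, C 11 877, P, C 7 1379, C 13 743, P, C 7 1381, C 19 509, C 17 569, P, P, C 23 421, P, C 11 881, P, C 89 109, C 31 313, C 17 571,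 C 7 1387, C 11 883, P, P, C 71 137, C 37 263, P, C 7 1391, P, P, P, C 7 1393]"
definition Q25 :: "nat list" where "Q25 = [9391, 9397, 9403, 9413, 9419, 9421, 9431, 9433, 9437, 9439, 9461, 9463, 9467, 9473, 9479, 9491, 9497, 9511, 9521, 9533, 9539, 9547, 9551, 9587, 9601, 9613, 9619, 9623, 9629, 9631, 9643, 9649, 9661, 9677, 9679, 9689, 9697, 9719, 9721, 9733, 9739, 9743, 9749]"
lemma run25: "run 9379 [4, 6, 2] E25 Q25 = Some (9757, [4, 2, 4, 2, 4, 6, 2])"
  by (simp add: E25_def Q25_def)
lemma lb25: "lb Q25 11218969248645 13320 = (4298387866314188, 13880)"
  by (simp add: Q25_def)
lemma len25: "length Q25 = 43"
  by (simp add: Q25_def)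

definition E26 :: "ent list" where "E26 = [C 11 887, C 43 227, C 13 751, P, P, C 29 337, C 7 1397, P, P, P, C 7 1399, C 97 101, C 41 239, P, C 17 577, P, P, C 7 1403, C 11 893, C 31 317, P, P, P, C 13 757, C 43 229, P, C 59 167, P, P, C 7 1409, C 71 139, P, C 7 1411, C 41 241, P, P, C 11 899, C 13 761, C 19 521, P, P, C 11 901, C 23 431, C 47 211, C 7 1417, P, P, P, C 19 523, P, C 61 163, C 7 1421, P, C 37 269, C 23 433, C 7 1423, P, C 13 767, P, C 11 907, C 17 587, C 67 149, C 7 1427, C 97 103, C 13 769, C 73 137, C 7 1429, P, P, C 17 589, C 43 233, C 11 911, C 37 271, C 7 1433, C 79 127, P, P, C 11 913, C 13 773, C 19 529, C 89 113, P, C 29 347, P, P, C 7 1439, P, C 17 593, C 7 1441, P, P, C 23 439, P, P, C 11 919, P, C 67 151, C 29 349, C 53 191, C 13 779]"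
definition Q26 :: "nat list" where "Q26 = [9767, 9769, 9781, 9787, 9791, 9803, 9811, 9817, 9829, 9833, 9839, 9851, 9857, 9859, 9871, 9883, 9887, 9901, 9907, 9923, 9929, 9931, 9941, 9949, 9967, 9973, 10007, 10009, 10037, 10039, 10061, 10067, 10069, 10079, 10091, 10093, 10099, 10103, 10111]"
lemma run26: "run 9757 [4, 2, 4, 2, 4, 6, 2] E26 Q26 = Some (10129, [4, 6, 2])"
  by (simp add: E26_def Q26_def)
lemma lb26: "lb Q26 4298387866314188 13880 = (954822522754468, 14400)"
  by (simp add: Q26_def)
lemma len26: "length Q26 = 39"
  by (simp add: Q26_def)

definition E27 :: "ent list" where "E27 = [C 7 1447, P, P, P, C 73 139, P, C 11 923, C 7 1451, P, P, P, C 7 1453, P, P, C 17 599, C 61 167, C 23 443, P, C 7 1457, C 101 101, C 59 173, P, C 7 1459, C 17 601, C 11 929, P, C 53 193, C 13 787, C 29 353, C 7 1463, P, P, C 37 277, P, P, C 31 331, P, P, P, C 43 239, C 19 541, C 7 1469, P, C 41 251, C 7 1471, P, P, C 11 937, C 13 793, P, C 17 607, P, C 23 449, P, P, P, C 7 1477, P, C 79 131, C 11 941, P, C 13 797, C 43 241, C 7 1481, P, C 11 943, C 97 107, C 7 1483, C 13 799, P, C 19 547, C 37 281, P, C 101 103, C 7 1487, C 29 359, C 11 947, C 17 613, C 7 1489, P, P, P, C 11 949, C 53 197, C 31 337, C 7 1493, P, P, P, P, C 19 551, C 37 283, P, C 47 223, C 11 953, P, C 17 617, C 7 1499, P, P]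"
definition Q27 :: "nat list" where "Q27 = [10133, 10139, 10141, 10151, 10159, 10163, 10169, 10177, 10181, 10193, 10211, 10223, 10243, 10247, 10253, 10259, 10267, 10271, 10273, 10289, 10301, 10303, 10313, 10321, 10331, 10333, 10337, 10343, 10357, 10369, 10391, 10399, 10427, 10429, 10433, 10453, 10457, 10459, 10463, 10477, 10487, 10499, 10501]"
lemma run27: "run 10129 [4, 6, 2] E27 Q27 = Some (10507, [4, 2, 4, 2, 4, 6, 2])"
  by (simp add: E27_def Q27_def)
lemma lb27: "lb Q27 954822522754468 14400 = (8939569078171, 14980)"
  by (simp add: Q27_def)
lemma len27: "length Q27 = 43"
  by (simp add: Q27_def)

definition E28 :: "ent list" where "E28 = [C 7 1501, C 23 457, P, C 13 809, C 67 157, C 17 619, P, P, C 41 257, C 83 127, C 13 811, C 53 199, C 7 1507, C 61 173, P, C 59 179, P, C 11 961, C 97 109, C 7 1511, C 71 149, C 19 557, P, C 7 1513, P, P, C 23 461, P, C 103 103, P, C 7 1517, C 13 817, P, P, C 7 1519, C 11 967, P, C 29 367, C 23 463, P, P, C 7 1523, P, P, C 47 227, C 13 821, C 59 181, C 11 971, P, P, C 17 629, C 19 563, C 13 823, C 7 1529, P, P, C 7 1531, C 71 151, P, C 17 631, P, P, P, C 23 467, C 11 977, C 13 827, P, C 31 347, C 7 1537, C 47 229, C 11 979, P, C 13 829, P, C 41 263, C 7 1541, P, C 43 251, P, C 7 1543, C 101 107, C 19 569, C 11 983, C 29 373, C 31 349, C 79 137, C 7 1547, P, P, C 37 293, C 7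 1549, P, C 19 571, P, P, P, P, C 7 1553, C 83 131, C 73 149]"
definition Q28 :: "nat list" where "Q28 = [10513, 10529, 10531, 10559, 10567, 10589, 10597, 10601, 10607, 10613, 10627, 10631, 10639, 10651, 10657, 10663, 10667, 10687, 10691, 10709, 10711, 10723, 10729, 10733, 10739, 10753, 10771, 10781, 10789, 10799, 10831, 10837, 10847, 10853, 10859, 10861, 10867]"
lemma run28: "run 10507 [4, 2, 4, 2, 4, 6, 2] E28 Q28 = Some (10879, [4, 6, 2])"
  by (simp add: E28_def Q28_def)
lemma lb28: "lb Q28 8939569078171 14980 = (346540595044197190, 15460)"
  by (simp add: Q28_def)
lemma len28: "length Q28 = 37"
  by (simp add: Q28_def)

definition E29 :: "ent list" where "E29 = [C 11 989, P, P, P, C 17 641, C 11 991, P, C 13 839, P, C 7 1559, C 61 179, C 67 163, C 7 1561, C 17 643, C 13 841, P, P, C 31 353, P, C 47 233, P, C 97 113, C 19 577, C 11 997, C 7 1567, P, P, C 79 139, P, C 29 379, P, C 7 1571, C 17 647, P, C 101 109, C 7 1573, C 23 479, C 103 107, C 73 151, P, C 41 269, C 11 1003, C 7 1577, C 61 181, P, C 43 257, C 7 1579, P, P, C 13 851, P, P, C 11 1007, C 7 1583, P, P, C 13 853, P, C 11 1009, C 17 653, C 29 383, C 41 271, P, P, P, C 7 1589, C 31 359, P, C 7 1591, C 13 857, C 11 1013, C 71 157, P, C 19 587, P, P, C 13 859, P, P, P, C 7 1597, C 53 211, C 67 167, C 19 589, P, C 23 487, C 17 659, C 7 1601, C 11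 1019, P, C 13 863, C 7 1603, C 103 109, C 11 1021, C 47 239, C 17 661, P, P, C 7 1607, P]"
definition Q29 :: "nat list" where "Q29 = [10883, 10889, 10891, 10903, 10909, 10937, 10939, 10949, 10957, 10973, 10979, 10987, 10993, 11003, 11027, 11047, 11057, 11059, 11069, 11071, 11083, 11087, 11093, 11113, 11117, 11119, 11131, 11149, 11159, 11161, 11171, 11173, 11177, 11197, 11213, 11239, 11243, 11251]"
lemma run29: "run 10879 [4, 6, 2] E29 Q29 = Some (11257, [4, 2, 4, 2, 4, 6, 2])"
  by (simp add: E29_def Q29_def)
lemma lb29: "lb Q29 346540595044197190 15460 = (468482705132489, 15980)"
  by (simp add: Q29_def)
lemma len29: "length Q29 = 38"
  by (simp add: Q29_def)

definition E30 :: "ent list" where "E30 = [P, P, C 7 1609, C 19 593, C 59 191, P, P, C 29 389, P, C 7 1613, C 23 491, C 11 1027, P, C 89 127, C 43 263, P, P, P, C 13 871, C 47 241, P, C 7 1619, C 17 667, C 11 1031, C 7 1621, P, P, C 41 277, C 37 307, C 11 1033, P, C 83 137, C 31 367, C 19 599, P, C 59 193, C 7 1627, P, P, C 13 877, C 11 1037, P, C 101 113, C 7 1631, C 19 601, P, C 11 1039, C 7 1633, P, C 17 673, P, P, C 107 107, C 13 881, C 7 1637, C 73 157, P, P, C 7 1639, C 23 499, C 13 883, P, P, P, P, C 7 1643, P, C 37 311, C 17 677, C 29 397, P, C 41 281, P, C 13 887, C 19 607, C 83 139, C 11 1049, C 7 1649, P, P, C 7 1651, C 11 1051, C 31 373,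 C 43 269, C 23 503, C 71 163, P, C 37 313, P, C 67 173, P, P, C 7 1657, C 41 283, C 13 893, C 17 683, P, P, C 59 197, C 7 1661]"
definition Q30 :: "nat list" where "Q30 = [11257, 11261, 11273, 11279, 11287, 11299, 11311, 11317, 11321, 11329, 11351, 11353, 11369, 11383, 11393, 11399, 11411, 11423, 11437, 11443, 11447, 11467, 11471, 11483, 11489, 11491, 11497, 11503, 11519, 11527, 11549, 11551, 11579, 11587, 11593, 11597, 11617, 11621]"
lemma run30: "run 11257 [4, 2, 4, 2, 4, 6, 2] E30 Q30 = Some (11629, [4, 6, 2])"
  by (simp add: E30_def Q30_def)
lemma lb30: "lb Q30 468482705132489 15980 = (2215986994643, 16500)"
  by (simp add: Q30_def)
lemma len30: "length Q30 = 38"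
  by (simp add: Q30_def)

definition E31 :: "ent list" where "E31 = [C 29 401, P, C 103 113, C 7 1663, C 19 613, C 61 191, C 43 271, P, C 89 131, C 107 109, C 7 1667, C 11 1061, P, P, C 7 1669, C 13 899, P, C 11 1063, P, P, C 23 509, C 7 1673, C 13 901, P, P, C 19 617, C 37 317, P, C 11 1067, C 59 199, P, C 17 691, C 31 379, C 7 1679, C 11 1069, C 19 619, C 7 1681, C 79 149, C 61 193, P, P, P, P, C 13 907, C 47 251, P, C 11 1073, P, C 7 1687, P, C 53 223, P, P, P, P, C 7 1691, P, C 13 911, C 17 697, C 7 1693, C 71 167, C 29 409, P, P, C 11 1079, C 31 383, C 7 1697, C 109 109, P, C 11 1081, C 7 1699, P, C 73 163, P, P, C 43 277, C 17 701, C 7 1703, P, P, C 79 151, P, P, P, C 13 919, C 17 703, P, C 11 1087, P, C 7 1709, P, P, C 7 1711, P, C 23 521, P, C 19 631, C 67 179, C 13 923, C 11 1091]"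
definition Q31 :: "nat list" where "Q31 = [11633, 11657, 11677, 11681, 11689, 11699, 11701, 11717, 11719, 11731, 11743, 11777, 11779, 11783, 11789, 11801, 11807, 11813, 11821, 11827, 11831, 11833, 11839, 11863, 11867, 11887, 11897, 11903, 11909, 11923, 11927, 11933, 11939, 11941, 11953, 11959, 11969, 11971, 11981, 11987]"
lemma run31: "run 11629 [4, 6, 2] E31 Q31 = Some (12007, [4, 2, 4, 2, 4, 6, 2])"
  by (simp add: E31_def Q31_def)
lemma lb31: "lb Q31 2215986994643 16500 = (5087446398555, 17040)"
  by (simp add: Q31_def)
lemma len31: "length Q31 = 40"
  by (simp add: Q31_def)

definition E32 :: "ent list" where "E32 = [P, P, C 41 293, C 61 197, C 7 1717, C 11 1093, C 23 523, C 53 227, P, P, P, C 7 1721, P, C 17 709, C 31 389, C 7 1723, C 11 1097, P, P, C 13 929, C 47 257, C 43 281, C 7 1727, C 107 113, P, P, C 7 1729, P, P, P, P, C 17 713, C 67 181, C 7 1733, C 11 1103, C 53 229, C 61 199, P, P, C 29 419, P, P, P, C 23 529, C 43 283, C 7 1739, C 19 641, C 13 937, C 7 1741, C 73 167, C 89 137, P, C 11 1109, P, C 29 421, P, C 19 643, C 11 1111, C 17 719, P, C 7 1747, C 13 941, P, P, C 37 331, P, P, C 7 1751, C 13 943, P, P, C 7 1753, P, P, C 71 173, C 11 1117, P, C 19 647, C 7 1757, P, C 31 397, C 13 947, C 7 1759, C 109 113, C 97 127, P, P, C 11 1121, C 13 949, C 7 1763, P, P, C 53 233, C 11 1123, C 17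 727, C 47 263, C 83 149, C 89 139, P, P]"
definition Q32 :: "nat list" where "Q32 = [12007, 12011, 12037, 12041, 12043, 12049, 12071, 12073, 12097, 12101, 12107, 12109, 12113, 12119, 12143, 12149, 12157, 12161, 12163, 12197, 12203, 12211, 12227, 12239, 12241, 12251, 12253, 12263, 12269, 12277, 12281, 12289, 12301, 12323, 12329, 12343, 12347, 12373, 12377]"
lemma run32: "run 12007 [4, 2, 4, 2, 4, 6, 2] E32 Q32 = Some (12379, [4, 6, 2])"
  by (simp add: E32_def Q32_def)
lemma lb32: "lb Q32 5087446398555 17040 = (3327202650346625, 17560)"
  by (simp add: Q32_def)
lemma len32: "length Q32 = 39"
  by (simp add: Q32_def)

definition E33 :: "ent list" where "E33 = [P, C 7 1769, C 13 953, P, C 7 1771, P, C 79 157, C 19 653, P, P, C 11 1129, P, C 17 731, C 31 401, P, P, C 7 1777, C 23 541, C 59 211, P, P, C 17 733, C 11 1133, C 7 1781, C 37 337, P, P, C 7 1783, P, P, C 13 961, P, C 29 431, P, C 7 1787, P, P, C 19 659, C 7 1789, P, C 11 1139, C 83 151, P, P, P, C 7 1793, P, C 29 433, C 19 661, C 17 739, P, C 13 967, P, C 23 547, P, C 41 307, P, C 7 1799, C 43 293, P, C 7 1801, P, P, C 11 1147, P, C 13 971, C 73 173, C 17 743, P, P, C 47 269, P, C 7 1807, P, P, C 11 1151, C 53 239, P, C 19 667, C 7 1811, C 31 409, C 11 1153, P, C 7 1813, P, C 13 977, P, C 97 131, C 71 179, P, C 7 1817, P, C 11 1157, C 29 439,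 C 7 1819, C 47 271, P, P, C 11 1159, C 41 311]"
definition Q33 :: "nat list" where "Q33 = [12379, 12391, 12401, 12409, 12413, 12421, 12433, 12437, 12451, 12457, 12473, 12479, 12487, 12491, 12497, 12503, 12511, 12517, 12527, 12539, 12541, 12547, 12553, 12569, 12577, 12583, 12589, 12601, 12611, 12613, 12619, 12637, 12641, 12647, 12653, 12659, 12671, 12689, 12697, 12703, 12713, 12721, 12739, 12743]"
lemma run33: "run 12379 [4, 6, 2] E33 Q33 = Some (12757, [4, 2, 4, 2, 4, 6, 2])"
  by (simp add: E33_def Q33_def)
lemma lb33: "lb Q33 3327202650346625 17560 = (1799851559811259, 18160)"
  by (simp add: Q33_def)
lemma len33: "length Q33 = 44"
  by (simp add: Q33_def)

definition E34 :: "ent list" where "E34 = [P, C 7 1823, P, C 17 751, C 113 113, C 53 241, C 13 983, P, C 19 673, P, C 11 1163, C 67 191, P, C 7 1829, P, C 23 557, C 7 1831, P, P, C 101 127, P, C 41 313, C 37 347, P, C 29 443, C 71 181, P, C 13 989, C 7 1837, C 19 677, C 17 757, C 61 211, C 79 163, C 11 1171, C 13 991, C 7 1841, P, P, P, C 7 1843, P, P, C 37 349, P, P, P, C 7 1847, C 67 193, C 17 761, P, C 7 1849, C 11 1177, C 23 563, P, P, C 13 997, P, C 7 1853, P, C 19 683, P, P, C 31 419, C 11 1181, C 41 317, P, P, P, P, C 7 1859, C 47 277, C 29 449, C 7 1861, C 83 157, P, P, C 13 1003, P, P, C 31 421, C 11 1187, C 37 353, P, C 73 179, C 7 1867, C 17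 769, C 11 1189, C 103 127, C 23 569, C 13 1007, P, C 7 1871, P, P, P, C 7 1873, C 13 1009, P, C 11 1193, P]"
definition Q34 :: "nat list" where "Q34 = [12757, 12763, 12781, 12791, 12799, 12809, 12821, 12823, 12829, 12841, 12853, 12889, 12893, 12899, 12907, 12911, 12917, 12919, 12923, 12941, 12953, 12959, 12967, 12973, 12979, 12983, 13001, 13003, 13007, 13009, 13033, 13037, 13043, 13049, 13063, 13093, 13099, 13103, 13109, 13121, 13127]"
lemma run34: "run 12757 [4, 2, 4, 2, 4, 6, 2] E34 Q34 = Some (13129, [4, 6, 2])"
  by (simp add: E34_def Q34_def)
lemma lb34: "lb Q34 1799851559811259 18160 = (1884057347456001, 18720)"
  by (simp add: Q34_def)
lemma len34: "length Q34 = 41"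
  by (simp add: Q34_def)

definition E35 :: "ent list" where "E35 = [C 19 691, C 23 571, C 7 1877, C 17 773, P, P, C 7 1879, C 59 223, P, P, C 13 1013, P, P, C 7 1883, P, P, C 11 1199, C 79 167, C 67 197, C 43 307, C 47 281, C 11 1201, C 73 181, P, P, C 7 1889, P, C 101 131, C 7 1891, P, C 17 779, C 13 1019, P, C 29 457, P, C 89 149, P, C 23 577, C 13 1021, C 11 1207, C 7 1897, C 37 359, C 97 137, P, P, C 47 283, C 53 251, C 7 1901, P, P, C 19 701, C 7 1903, P, P, C 67 199, P, P, C 11 1213, C 7 1907, C 13 1027, C 19 703, C 31 431, C 7 1909, P, C 29 461, C 43 311, C 17 787, P, C 11 1217, C 7 1913, C 59 227, P, P, C 13 1031, C 11 1219, P, P, P, C 31 433, C 29 463, C 13 1033, C 7 1919, C 89 151, P, C 7 1921, P, C 11 1223, P, C 43 313, P, P, C 19 709, P, C 13 1037, C 97 139, P, C 7 1927, C 103 131, P, C 23 587]"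
definition Q35 :: "nat list" where "Q35 = [13147, 13151, 13159, 13163, 13171, 13177, 13183, 13187, 13217, 13219, 13229, 13241, 13249, 13259, 13267, 13291, 13297, 13309, 13313, 13327, 13331, 13337, 13339, 13367, 13381, 13397, 13399, 13411, 13417, 13421, 13441, 13451, 13457, 13463, 13469, 13477, 13487, 13499]"
lemma run35: "run 13129 [4, 6, 2] E35 Q35 = Some (13507, [4, 2, 4, 2, 4, 6, 2])"
  by (simp add: E35_def Q35_def)
lemma lb35: "lb Q35 1884057347456001 18720 = (2938569546893395, 19240)"
  by (simp add: Q35_def)
lemma len35: "length Q35 = 38"
  by (simp add: Q35_def)

definition E36 :: "ent list" where "E36 = [C 13 1039, C 59 229, P, C 7 1931, C 11 1229, P, C 83 163, C 7 1933, P, C 11 1231, C 29 467, C 19 713, C 17 797, P, C 7 1937, C 71 191, P, C 41 331, C 7 1939, P, C 37 367, C 17 799, C 107 127, P, P, C 7 1943, C 61 223, C 11 1237, C 31 439, P, P, C 53 257, P, C 43 317, P, C 13 1049, C 23 593, C 7 1949, P, C 11 1241, C 7 1951, C 19 719, C 13 1051, C 79 173, P, C 11 1243, P, P, P, P, P, P, C 7 1957, C 71 193, P, P, C 11 1247, P, P, C 7 1961, P, C 31 443, C 11 1249, C 7 1963, C 59 233, P, C 17 809, P, P, P, C 7 1967, C 47 293, C 23 599, P, C 7 1969, C 17 811, P, C 13 1061, P, C 37 373, P, C 7 1973, C 19 727, C 41 337, C 13 1063, C 23 601, P, P, C 101 137, P, C 109 127, C 61 227, C 11 1259, C 7 1979,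 P, C 83 167, C 7 1981, C 11 1261, P, P]"
definition Q36 :: "nat list" where "Q36 = [13513, 13523, 13537, 13553, 13567, 13577, 13591, 13597, 13613, 13619, 13627, 13633, 13649, 13669, 13679, 13681, 13687, 13691, 13693, 13697, 13709, 13711, 13721, 13723, 13729, 13751, 13757, 13759, 13763, 13781, 13789, 13799, 13807, 13829, 13831, 13841, 13859, 13873, 13877]"
lemma run36: "run 13507 [4, 2, 4, 2, 4, 6, 2] E36 Q36 = Some (13879, [4, 6, 2])"
  by (simp add: E36_def Q36_def)
lemma lb36: "lb Q36 2938569546893395 19240 = (175286296839549, 19780)"
  by (simp add: Q36_def)
lemma len36: "length Q36 = 39"
  by (simp add: Q36_def)

definition E37 :: "ent list" where "E37 = [P, P, C 17 817, C 29 479, C 13 1069, P, P, P, C 7 1987, P, C 31 449, P, C 19 733, P, P, C 7 1991, C 53 263, C 73 191, C 13 1073, C 7 1993, C 17 821, C 23 607, P, P, C 61 229, C 89 157, C 7 1997, C 11 1271, C 71 197, C 17 823, C 7 1999, P, P, C 11 1273, P, P, C 107 131, C 7 2003, C 37 379, C 13 1079, P, P, C 101 139, C 19 739, C 11 1277, P, C 13 1081, P, C 17 827, C 7 2009, C 11 1279, P, C 7 2011, P, P, P, C 73 193, C 17 829, C 23 613, C 59 239, P, C 103 137, C 11 1283, C 19 743, C 7 2017, C 29 487, C 71 199, C 13 1087, C 67 211, C 79 179, P, C 7 2021, P, P, P, C 7 2023, C 31 457, C 37 383, P, P, C 11 1289, C 13 1091, C 7 2027, C 23 617, P, C 11 1291,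 C 7 2029, P, C 13 1093, C 61 233, C 59 241, P, C 41 347, C 7 2033, C 43 331, C 23 619, C 29 491, P, P, P]"
definition Q37 :: "nat list" where "Q37 = [13879, 13883, 13901, 13903, 13907, 13913, 13921, 13931, 13933, 13963, 13967, 13997, 13999, 14009, 14011, 14029, 14033, 14051, 14057, 14071, 14081, 14083, 14087, 14107, 14143, 14149, 14153, 14159, 14173, 14177, 14197, 14207, 14221, 14243, 14249, 14251]"
lemma run37: "run 13879 [4, 6, 2] E37 Q37 = Some (14257, [4, 2, 4, 2, 4, 6, 2])"
  by (simp add: E37_def Q37_def)
lemma lb37: "lb Q37 175286296839549 19780 = (11270071247282, 20280)"
  by (simp add: Q37_def)
lemma len37: "length Q37 = 36"
  by (simp add: Q37_def)

definition E38 :: "ent list" where "E38 = [C 53 269, C 13 1097, C 17 839, C 11 1297, C 19 751, C 7 2039, C 109 131, P, C 7 2041, C 31 461, P, C 17 841, C 79 181, P, C 41 349, C 11 1301, C 103 139, P, P, P, C 7 2047, C 11 1303, C 13 1103, P, P, C 113 127, C 31 463, C 7 2051, C 83 173, C 53 271, P, C 7 2053, C 11 1307, C 73 197, C 19 757, P, P, C 37 389, C 7 2057, P, P, P, C 7 2059, C 13 1109, P, P, C 47 307, P, P, C 7 2063, C 11 1313, P, P, C 97 149, C 19 761, P, C 17 851, C 29 499, C 41 353, C 31 467, P, C 7 2069, P, C 43 337, C 7 2071, C 17 853, P, C 89 163, C 11 1319, C 23 631, P, C 13 1117, C 73 199, C 11 1321, P, P, C 7 2077, P, P, P, P, P, P,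 C 7 2081, C 17 857, C 13 1121, C 61 239, C 7 2083, C 29 503, P, P, C 11 1327, C 13 1123, C 17 859, C 7 2087, C 19 769, C 47 311, P, C 7 2089, P]"
definition Q38 :: "nat list" where "Q38 = [14281, 14293, 14303, 14321, 14323, 14327, 14341, 14347, 14369, 14387, 14389, 14401, 14407, 14411, 14419, 14423, 14431, 14437, 14447, 14449, 14461, 14479, 14489, 14503, 14519, 14533, 14537, 14543, 14549, 14551, 14557, 14561, 14563, 14591, 14593, 14621, 14627]"
lemma run38: "run 14257 [4, 2, 4, 2, 4, 6, 2] E38 Q38 = Some (14629, [4, 6, 2])"
  by (simp add: E38_def Q38_def)
lemma lb38: "lb Q38 11270071247282 20280 = (28553822418241547, 20780)"
  by (simp add: Q38_def)
lemma len38: "length Q38 = 37"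
  by (simp add: Q38_def)

definition E39 :: "ent list" where "E39 = [P, P, P, C 11 1331, C 97 151, C 7 2093, P, P, C 107 137, C 11 1333, P, C 17 863, C 13 1129, C 53 277, P, C 19 773, C 37 397, C 7 2099, P, C 61 241, C 7 2101, C 47 313, P, P, C 41 359, P, C 11 1339, P, P, P, C 23 641, P, C 7 2107, P, P, C 29 509, P, P, C 11 1343, C 7 2111, P, P, C 23 643, C 7 2113, P, C 19 779, C 113 131, C 13 1139, C 59 251, P, C 7 2117, P, P, P, C 7 2119, C 37 401, C 11 1349, P, C 31 479, P, C 83 179, C 7 2123, C 89 167, P, P, C 107 139, P, C 23 647, P, P, C 53 281, P, C 47 317, C 7 2129, C 17 877, C 13 1147, C 7 2131, C 43 347, P, C 11 1357, P, C 109 137, P, C 67 223, P, P, C 19 787, P, C 7 2137, C 13 1151, P, C 11 1361, C 17 881, C 71 211, P, C 7 2141, C 13 1153, C 11 1363, C 53 283, C 7 2143]"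
definition Q39 :: "nat list" where "Q39 = [14629, 14633, 14639, 14653, 14657, 14669, 14683, 14699, 14713, 14717, 14723, 14731, 14737, 14741, 14747, 14753, 14759, 14767, 14771, 14779, 14783, 14797, 14813, 14821, 14827, 14831, 14843, 14851, 14867, 14869, 14879, 14887, 14891, 14897, 14923, 14929, 14939, 14947, 14951, 14957, 14969, 14983]"
lemma run39: "run 14629 [4, 6, 2] E39 Q39 = Some (15007, [4, 2, 4, 2, 4, 6, 2])"
  by (simp add: E39_def Q39_def)
lemma lb39: "lb Q39 28553822418241547 20780 = (102425838501596447, 21360)"
  by (simp add: Q39_def)
lemma len39: "length Q39 = 42"
  by (simp add: Q39_def)

definition E40 :: "ent list" where "E40 = [C 43 349, C 17 883, P, P, C 23 653, C 83 181, C 7 2147, P, C 11 1367, C 13 1157, C 7 2149, C 41 367, C 101 149, P, C 11 1369, P, C 13 1159, C 7 2153, P, P, C 17 887, P, C 79 191, P, C 31 487, P, C 11 1373, P, C 29 521, C 7 2159, C 13 1163, P, C 7 2161, P, C 37 409, P, P, C 19 797, P, C 109 139, C 23 659, P, C 59 257, C 29 523, C 7 2167, P, C 43 353, C 17 893, P, C 11 1381, P, C 7 2171, P, C 23 661, C 67 227, C 7 2173, P, C 31 491, C 13 1171, P, C 97 157, P, C 7 2177, P, C 79 193, C 101 151, C 7 2179, C 11 1387, P, P, P, P, P, C 7 2183, C 17 899, P, P, C 41 373, P, C 11 1391, P, C 61 251, P, C 17 901, P, C 7 2189, P, P, C 7 2191, C 23 667, C 67 229, C 103 149, P, C 13 1181,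 P, P, C 11 1397, C 19 809, P, P]"
definition Q40 :: "nat list" where "Q40 = [15013, 15017, 15031, 15053, 15061, 15073, 15077, 15083, 15091, 15101, 15107, 15121, 15131, 15137, 15139, 15149, 15161, 15173, 15187, 15193, 15199, 15217, 15227, 15233, 15241, 15259, 15263, 15269, 15271, 15277, 15287, 15289, 15299, 15307, 15313, 15319, 15329, 15331, 15349, 15359, 15361, 15373, 15377]"
lemma run40: "run 15007 [4, 2, 4, 2, 4, 6, 2] E40 Q40 = Some (15379, [4, 6, 2])"
  by (simp add: E40_def Q40_def)
lemma lb40: "lb Q40 102425838501596447 21360 = (16530176119561683, 21960)"
  by (simp add: Q40_def)
lemma len40: "length Q40 = 43"
  by (simp add: Q40_def)

definition E41 :: "ent list" where "E41 = [C 7 2197, P, C 11 1399, P, C 89 173, P, C 73 211, C 7 2201, C 19 811, P, C 17 907, C 7 2203, P, C 13 1187, C 11 1403, C 43 359, P, P, C 7 2207, P, C 13 1189, P, C 7 2209, P, C 31 499, P, C 23 673, C 113 137, C 17 911, C 7 2213, P, P, C 11 1409, C 37 419, C 13 1193, P, C 59 263, C 11 1411, C 19 817, P, C 53 293, C 7 2219, C 41 379, P, C 7 2221, P, C 103 151, C 47 331, P, C 79 197, P, C 23 677, C 37 421, P, P, C 11 1417, C 7 2227, C 31 503, C 19 821, P, P, C 67 233, C 13 1201, C 7 2231, P, C 17 919, P, C 7 2233, C 19 823, P, P, P, P, C 11 1423, C 7 2237, P, P, P, C 7 2239, C 61 257, P, P, C 29 541, C 13 1207, C 11 1427, C 7 2243,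 C 41 383, C 113 139, C 23 683, C 19 827, C 11 1429, C 79 199, P, P, P, P, P, C 7 2249, P, C 19 829]"
definition Q41 :: "nat list" where "Q41 = [15383, 15391, 15401, 15413, 15427, 15439, 15443, 15451, 15461, 15467, 15473, 15493, 15497, 15511, 15527, 15541, 15551, 15559, 15569, 15581, 15583, 15601, 15607, 15619, 15629, 15641, 15643, 15647, 15649, 15661, 15667, 15671, 15679, 15683, 15727, 15731, 15733, 15737, 15739, 15749]"
lemma run41: "run 15379 [4, 6, 2] E41 Q41 = Some (15757, [4, 2, 4, 2, 4, 6, 2])"
  by (simp add: E41_def Q41_def)
lemma lb41: "lb Q41 16530176119561683 21960 = (2174910851944025, 22520)"
  by (simp add: Q41_def)
lemma len41: "length Q41 = 40"
  by (simp add: Q41_def)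

definition E42 :: "ent list" where "E42 = [C 7 2251, P, C 11 1433, P, C 13 1213, P, C 31 509, C 43 367, P, P, C 17 929, P, C 7 2257, P, P, C 97 163, P, C 13 1217, P, C 7 2261, C 11 1439, C 71 223, C 47 337, C 7 2263, C 13 1219, C 11 1441, C 83 191, C 101 157, P, C 29 547, C 7 2267, C 59 269, P, P, C 7 2269, P, P, C 23 691, C 13 1223, P, P, C 7 2273, P, C 11 1447, P, P, C 17 937, C 89 179, P, C 19 839, C 107 149, C 37 431, C 41 389, C 7 2279, P, C 11 1451, C 7 2281, P, P, C 13 1229, C 19 841, C 11 1453, C 59 271, P, C 17 941, P, C 13 1231, P, C 7 2287, C 67 239, C 83 193, C 37 433, C 11 1457, C 17 943, P, C 7 2291, C 43 373, C 61 263, C 11 1459, C 7 2293, P, P, P, P, P, P, C 7 2297, C 13 1237, P, P, C 7 2299, P, C 17 947, P, C 89 181, P, C 71 227, C 7 2303, C 23 701, P]"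
definition Q42 :: "nat list" where "Q42 = [15761, 15767, 15773, 15787, 15791, 15797, 15803, 15809, 15817, 15823, 15859, 15877, 15881, 15887, 15889, 15901, 15907, 15913, 15919, 15923, 15937, 15959, 15971, 15973, 15991, 16001, 16007, 16033, 16057, 16061, 16063, 16067, 16069, 16073, 16087, 16091, 16097, 16103, 16111, 16127]"
lemma run42: "run 15757 [4, 2, 4, 2, 4, 6, 2] E42 Q42 = Some (16129, [4, 6, 2])"
  by (simp add: E42_def Q42_def)
lemma lb42: "lb Q42 2174910851944025 22520 = (731385373174874, 23080)"
  by (simp add: Q42_def)
lemma len42: "length Q42 = 40"
  by (simp add: Q42_def)

definition E43 :: "ent list" where "E43 = [C 127 127, C 13 1241, P, P, C 67 241, C 31 521, C 29 557, C 107 151, C 11 1469, C 7 2309, C 19 851, C 103 157, C 7 2311, C 11 1471, P, P, P, P, C 97 167, C 17 953, C 19 853, C 13 1247, C 31 523, P, C 7 2317, P, P, P, C 13 1249, C 109 149, C 37 439, C 7 2321, P, P, C 71 229, C 7 2323, P, C 53 307, P, C 41 397, C 73 223, C 19 857, C 7 2327, C 11 1481, C 43 379, P, C 7 2329, C 23 709, C 47 347, C 11 1483, P, C 19 859, C 29 563, C 7 2333, P, C 17 961, P, C 59 277, P, C 83 197, C 11 1487, P, P, C 13 1259, P, C 7 2339, C 11 1489, P, C 7 2341, C 37 443, C 13 1261, C 19 863, C 23 713, C 47 349, C 61 269, P, P, P, C 11 1493, P, C 7 2347, P, C 17 967, C 41 401, P, P, P, C 7 2351, C 109 151, C 101 163,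 C 43 383, C 7 2353, P, P, C 53 311, P, C 11 1499, P, C 7 2357, C 29 569]"
definition Q43 :: "nat list" where "Q43 = [16139, 16141, 16183, 16187, 16189, 16193, 16217, 16223, 16229, 16231, 16249, 16253, 16267, 16273, 16301, 16319, 16333, 16339, 16349, 16361, 16363, 16369, 16381, 16411, 16417, 16421, 16427, 16433, 16447, 16451, 16453, 16477, 16481, 16487, 16493]"
lemma run43: "run 16129 [4, 6, 2] E43 Q43 = Some (16507, [4, 2, 4, 2, 4, 6, 2])"
  by (simp add: E43_def Q43_def)
lemma lb43: "lb Q43 731385373174874 23080 = (664138319855815853, 23560)"
  by (simp add: Q43_def)
lemma len43: "length Q43 = 35"
  by (simp add: Q43_def)

definition E44 :: "ent list" where "E44 = [C 17 971, C 11 1501, C 7 2359, C 83 199, P, C 13 1271, P, C 61 271, C 23 719, C 7 2363, C 71 233, P, C 13 1273, P, C 29 571, P, P, C 73 227, P, C 11 1507, C 59 281, C 7 2369, C 53 313, C 47 353, C 7 2371, C 13 1277, P, P, C 17 977, C 37 449, P, C 11 1511, C 13 1279, P, P, C 127 131, C 7 2377, C 11 1513, P, P, P, P, C 19 877, C 7 2381, C 79 211, P, C 13 1283, C 7 2383, C 11 1517, P, P, C 59 283, P, P, C 7 2387, C 17 983, C 73 229, C 23 727, C 7 2389, C 43 389, P, C 29 577, C 19 881, P, P, C 7 2393, C 11 1523, C 13 1289, P, P, C 41 409, C 31 541, C 19 883, C 97 173, C 13 1291, P, C 103 163, C 7 2399, C 107 157, C 53 317, C 7 2401, P, C 17 989,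 C 67 251, C 11 1529, P, P, P, C 113 149, C 11 1531, P, C 17 991, C 7 2407, C 19 887, C 23 733, C 13 1297, C 101 167, P, C 47 359, C 7 2411]"
definition Q44 :: "nat list" where "Q44 = [16519, 16529, 16547, 16553, 16561, 16567, 16573, 16603, 16607, 16619, 16631, 16633, 16649, 16651, 16657, 16661, 16673, 16691, 16693, 16699, 16703, 16729, 16741, 16747, 16759, 16763, 16787, 16811, 16823, 16829, 16831, 16843, 16871]"
lemma run44: "run 16507 [4, 2, 4, 2, 4, 6, 2] E44 Q44 = Some (16879, [4, 6, 2])"
  by (simp add: E44_def Q44_def)
lemma lb44: "lb Q44 664138319855815853 23560 = (4602763813970, 24040)"
  by (simp add: Q44_def)
lemma len44: "length Q44 = 33"
  by (simp add: Q44_def)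

definition E45 :: "ent list" where "E45 = [P, P, P, C 7 2413, C 61 277, P, P, C 11 1537, C 37 457, C 13 1301, C 7 2417, P, P, P, C 7 2419, P, C 13 1303, P, C 17 997, C 11 1541, C 31 547, C 7 2423, P, C 19 893, C 71 239, C 11 1543, P, P, P, C 13 1307, P, C 23 739, C 89 191, C 7 2429, C 73 233, P, C 7 2431, P, C 29 587, P, P, P, C 11 1549, P, P, C 17 1003, P, C 37 461, C 7 2437, C 113 151, C 13 1313, C 43 397, P, C 19 899, C 11 1553, C 7 2441, C 23 743, P, P, C 7 2443, P, C 71 241, C 109 157, P, C 17 1007, P, C 7 2447, C 37 463, P, C 61 281, C 7 2449, C 13 1319, C 11 1559, C 17 1009, P, C 131 131, P, C 7 2453, C 13 1321, C 89 193, C 41 419, P, P, P, C 29 593, C 103 167, P, P, P, C 7 2459, C 67 257, C 17 1013, C 7 2461, P, C 19 907, C 11 1567, P, C 43 401, C 47 367, C 13 1327]"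
definition Q45 :: "nat list" where "Q45 = [16879, 16883, 16889, 16901, 16903, 16921, 16927, 16931, 16937, 16943, 16963, 16979, 16981, 16987, 16993, 17011, 17021, 17027, 17029, 17033, 17041, 17047, 17053, 17077, 17093, 17099, 17107, 17117, 17123, 17137, 17159, 17167, 17183, 17189, 17191, 17203, 17207, 17209, 17231, 17239]"
lemma run45: "run 16879 [4, 6, 2] E45 Q45 = Some (17257, [4, 2, 4, 2, 4, 6, 2])"
  by (simp add: E45_def Q45_def)
lemma lb45: "lb Q45 4602763813970 24040 = (22651468359795, 24600)"
  by (simp add: Q45_def)
lemma len45: "length Q45 = 40"
  by (simp add: Q45_def)

definition E46 :: "ent list" where "E46 = [P, C 41 421, C 61 283, C 31 557, C 7 2467, C 23 751, C 37 467, C 11 1571, C 59 293, P, P, C 7 2471, P, C 11 1573, C 19 911, C 7 2473, P, P, C 17 1019, P, C 13 1333, P, C 7 2477, P, C 11 1577, P, C 7 2479, C 17 1021, P, C 97 179, C 11 1579, C 29 599, P, C 7 2483, P, P, P, P, C 127 137, P, C 13 1339, C 23 757, C 11 1583, P, P, C 7 2489, C 29 601, P, C 7 2491, C 107 163, P, C 73 239, P, C 31 563, C 13 1343, C 19 919, P, P, C 101 173, P, C 7 2497, P, P, P, P, C 11 1591, C 23 761, C 7 2501, P, C 83 211, P, C 7 2503, C 17 1031, C 47 373, C 89 197, C 13 1349, P, C 53 331, C 7 2507, P, C 97 181, C 17 1033, C 7 2509, C 11 1597, P, P, P, P, C 43 409, C 7 2513, C 73 241, P, P, C 29 607, P, C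 11 1601, C 79 223, C 67 263, P, P]"
definition Q46 :: "nat list" where "Q46 = [17257, 17291, 17293, 17299, 17317, 17321, 17327, 17333, 17341, 17351, 17359, 17377, 17383, 17387, 17389, 17393, 17401, 17417, 17419, 17431, 17443, 17449, 17467, 17471, 17477, 17483, 17489, 17491, 17497, 17509, 17519, 17539, 17551, 17569, 17573, 17579, 17581, 17597, 17599, 17609, 17623, 17627]"
lemma run46: "run 17257 [4, 2, 4, 2, 4, 6, 2] E46 Q46 = Some (17629, [4, 6, 2])"
  by (simp add: E46_def Q46_def)
lemma lb46: "lb Q46 22651468359795 24600 = (81468467069429963, 25180)"
  by (simp add: Q46_def)
lemma len46: "length Q46 = 42"
  by (simp add: Q46_def)

definition E47 :: "ent list" where "E47 = [C 17 1037, C 7 2519, C 31 569, C 13 1357, C 7 2521, C 19 929, C 127 139, P, P, C 17 1039, P, C 41 431, C 11 1607, P, P, C 23 769, C 7 2527, C 13 1361, C 11 1609, C 31 571, P, C 89 199, P, C 7 2531, C 13 1363, C 37 479, P, C 7 2533, P, C 113 157, C 11 1613, P, P, C 41 433, C 7 2537, P, C 109 163, C 13 1367, C 7 2539, C 29 613, C 23 773, P, P, P, C 13 1369, C 7 2543, C 19 937, P, C 11 1619, C 47 379, C 103 173, C 71 251, P, C 11 1621, C 17 1049, P, P, C 7 2549, C 13 1373, P, C 7 2551, C 53 337, P, C 17 1051, C 107 167, C 61 293, C 19 941, P, C 31 577, P, C 29 617, C 11 1627, C 7 2557, P, P, P, C 19 943, P, P, C 7 2561, P, C 79 227, P, C 7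 2563, C 131 137, C 29 619, C 13 1381, P, P, C 11 1633, C 7 2567, P, P, P, C 7 2569, P, P, C 19 947, C 41 439, C 47 383]"
definition Q47 :: "nat list" where "Q47 = [17657, 17659, 17669, 17681, 17683, 17707, 17713, 17729, 17737, 17747, 17749, 17761, 17783, 17789, 17791, 17807, 17827, 17837, 17839, 17851, 17863, 17881, 17891, 17903, 17909, 17911, 17921, 17923, 17929, 17939, 17957, 17959, 17971, 17977, 17981, 17987, 17989]"
lemma run47: "run 17629 [4, 6, 2] E47 Q47 = Some (18007, [4, 2, 4, 2, 4, 6, 2])"
  by (simp add: E47_def Q47_def)
lemma lb47: "lb Q47 81468467069429963 25180 = (470444268660418437, 25700)"
  by (simp add: Q47_def)
lemma len47: "length Q47 = 37"
  by (simp add: Q47_def)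

definition E48 :: "ent list" where "E48 = [C 11 1637, C 7 2573, P, C 43 419, C 37 487, C 67 269, C 11 1639, C 13 1387, C 17 1061, P, P, P, P, C 7 2579, P, P, C 7 2581, C 17 1063, C 11 1643, P, C 101 179, C 13 1391, P, C 79 229, P, C 23 787, C 43 421, C 19 953, C 7 2587, C 59 307, P, P, P, P, P, C 7 2591, C 11 1649, P, P, C 7 2593, C 67 271, C 11 1651, C 41 443, C 37 491, P, C 17 1069, C 7 2597, P, C 13 1399, P, C 7 2599, C 31 587, P, C 109 167, C 131 139, P, P, C 7 2603, P, C 11 1657, P, P, C 13 1403, C 17 1073, C 71 257, P, P, P, C 19 961, C 7 2609, P, C 11 1661, C 7 2611, C 101 181, C 47 389, P, P, C 11 1663, C 29 631, P, P, P, P, C 13 1409, C 7 2617, C 73 251, P, C 23 797, C 11 1667, P, C 13 1411, C 7 2621, C 59 311, P, C 11 1669, C 7 2623, P, P, C 19 967, C 17 1081]"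
definition Q48 :: "nat list" where "Q48 = [18013, 18041, 18043, 18047, 18049, 18059, 18061, 18077, 18089, 18097, 18119, 18121, 18127, 18131, 18133, 18143, 18149, 18169, 18181, 18191, 18199, 18211, 18217, 18223, 18229, 18233, 18251, 18253, 18257, 18269, 18287, 18289, 18301, 18307, 18311, 18313, 18329, 18341, 18353, 18367, 18371]"
lemma run48: "run 18007 [4, 2, 4, 2, 4, 6, 2] E48 Q48 = Some (18379, [4, 6, 2])"
  by (simp add: E48_def Q48_def)
lemma lb48: "lb Q48 470444268660418437 25700 = (539272358519993674, 26280)"
  by (simp add: Q48_def)
lemma len48: "length Q48 = 41"
  by (simp add: Q48_def)

definition E49 :: "ent list" where "E49 = [P, C 31 593, C 7 2627, C 53 347, P, P, C 7 2629, C 79 233, C 41 449, P, C 113 163, C 13 1417, P, C 7 2633, P, C 103 179, P, P, C 19 971, P, P, P, C 37 499, C 59 313, C 11 1679, C 7 2639, C 17 1087, P, C 7 2641, C 11 1681, P, C 53 349, C 13 1423, P, C 83 223, C 107 173, P, P, P, C 97 191, C 7 2647, C 43 431, P, P, C 17 1091, C 13 1427, P, C 7 2651, C 67 277, C 19 977, C 31 599, C 7 2653, C 13 1429, C 17 1093, P, P, C 29 641, P, C 7 2657, C 11 1691, C 23 809, C 37 503, C 7 2659, P, C 43 433, C 11 1693, C 13 1433, C 31 601, P, C 7 2663, C 103 181, C 29 643, C 17 1097, C 23 811, C 47 397, P, C 11 1697, P, C 71 263, C 19 983, P, C 7 2669, C 11 1699, P, C 7 2671, P, C 59 317, C 13 1439,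 C 53 353, P, P, C 97 193, C 61 307, P, C 11 1703, C 41 457, C 7 2677, P, P, C 17 1103]"
definition Q49 :: "nat list" where "Q49 = [18379, 18397, 18401, 18413, 18427, 18433, 18439, 18443, 18451, 18457, 18461, 18481, 18493, 18503, 18517, 18521, 18523, 18539, 18541, 18553, 18583, 18587, 18593, 18617, 18637, 18661, 18671, 18679, 18691, 18701, 18713, 18719, 18731, 18743, 18749]"
lemma run49: "run 18379 [4, 6, 2] E49 Q49 = Some (18757, [4, 2, 4, 2, 4, 6, 2])"
  by (simp add: E49_def Q49_def)
lemma lb49: "lb Q49 539272358519993674 26280 = (41036850293819813, 26780)"
  by (simp add: Q49_def)
lemma len49: "length Q49 = 35"
  by (simp add: Q49_def)

definition E50 :: "ent list" where "E50 = [P, C 73 257, C 29 647, C 7 2681, C 137 137, P, C 89 211, C 7 2683, P, C 19 989, P, P, C 11 1709, P, C 7 2687, C 13 1447, C 31 607, C 11 1711, C 7 2689, C 67 281, C 19 991, C 37 509, P, C 83 227, C 47 401, C 7 2693, C 17 1109, C 109 173, P, C 13 1451, P, C 113 167, C 43 439, C 79 239, C 23 821, C 11 1717, C 13 1453, C 7 2699, P, C 41 461, C 7 2701, P, P, P, P, C 127 149, C 23 823, C 11 1721, C 29 653, C 13 1457, C 19 997, P, C 7 2707, C 11 1723, P, C 67 283, C 13 1459, C 61 311, P, C 7 2711, P, C 41 463, C 17 1117, C 7 2713, C 11 1727, P, C 31 613, C 83 229, P, P, C 7 2717, C 23 827, C 53 359, P, C 7 2719, P, C 79 241, C 137 139,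 C 43 443, P, C 17 1121, C 7 2723, C 11 1733, C 23 829, P, P, P, P, P, C 17 1123, C 61 313, C 13 1469, C 71 269, C 7 2729, C 97 197, C 29 659, C 7 2731, P, C 13 1471, C 31 617]"
definition Q50 :: "nat list" where "Q50 = [18757, 18773, 18787, 18793, 18797, 18803, 18839, 18859, 18869, 18899, 18911, 18913, 18917, 18919, 18947, 18959, 18973, 18979, 19001, 19009, 19013, 19031, 19037, 19051, 19069, 19073, 19079, 19081, 19087, 19121]"
lemma run50: "run 18757 [4, 2, 4, 2, 4, 6, 2] E50 Q50 = Some (19129, [4, 6, 2])"
  by (simp add: E50_def Q50_def)
lemma lb50: "lb Q50 41036850293819813 26780 = (3051498962265, 27220)"
  by (simp add: Q50_def)
lemma len50: "length Q50 = 30"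
  by (simp add: Q50_def)

definition E51 :: "ent list" where "E51 = [C 11 1739, C 19 1007, P, P, C 41 467, C 11 1741, C 107 179, P, C 7 2737, P, C 29 661, C 19 1009, C 127 151, P, P, C 7 2741, C 31 619, C 17 1129, C 73 263, C 7 2743, P, P, P, C 11 1747, P, C 47 409, C 7 2747, P, P, C 71 271, C 7 2749, C 19 1013, P, C 13 1481, P, C 11 1751, P, C 7 2753, P, C 37 521, C 13 1483, C 11 1753, P, C 101 191, C 23 839, P, C 97 199, C 43 449, P, C 7 2759, P, C 139 139, C 7 2761, C 13 1487, P, C 61 317, C 83 233, C 23 841, C 11 1759, C 37 523, C 13 1489, C 19 1019, C 17 1139, C 107 181, C 7 2767, P, P, P, P, P, C 11 1763, C 7 2771, C 19 1021, P, C 13 1493, C 7 2773, P, P, P, P, P, P, C 7 2777, P, P, C 53 367, C 7 2779, P, C 11 1769, P, P, P, P, C 7 2783, P, C 13 1499, P, C 101 193, C 17 1147, P]"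
definition Q51 :: "nat list" where "Q51 = [19139, 19141, 19157, 19163, 19181, 19183, 19207, 19211, 19213, 19219, 19231, 19237, 19249, 19259, 19267, 19273, 19289, 19301, 19309, 19319, 19333, 19373, 19379, 19381, 19387, 19391, 19403, 19417, 19421, 19423, 19427, 19429, 19433, 19441, 19447, 19457, 19463, 19469, 19471, 19477, 19483, 19489, 19501]"
lemma run51: "run 19129 [4, 6, 2] E51 Q51 = Some (19507, [4, 2, 4, 2, 4, 6, 2])"
  by (simp add: E51_def Q51_def)
lemma lb51: "lb Q51 3051498962265 27220 = (15130559291211379, 27820)"
  by (simp add: Q51_def)
lemma len51: "length Q51 = 43"
  by (simp add: Q51_def)

definition E52 :: "ent list" where "E52 = [P, C 109 179, C 13 1501, C 29 673, C 131 149, C 7 2789, C 59 331, P, C 7 2791, P, P, C 11 1777, C 113 173, P, P, C 31 631, C 17 1151, P, C 23 851, P, C 7 2797, P, C 19 1031, C 11 1781, P, C 17 1153, P, C 7 2801, P, C 11 1783, C 23 853, C 7 2803, C 19 1033, C 67 293, C 29 677, C 73 269, C 41 479, C 13 1511, C 7 2807, C 43 457, C 11 1787, P, C 7 2809, C 71 277, C 13 1513, C 103 191, C 11 1789, P, P, C 7 2813, C 47 419, P, P, C 17 1159, P, C 23 857, P, C 13 1517, C 11 1793, P, C 109 181, C 7 2819, P, C 19 1039, C 7 2821, P, P, C 23 859, P, P, C 53 373, C 17 1163, P, C 131 151, C 73 271, C 47 421, C 7 2827, P, C 13 1523, P, C 29 683, C 11 1801, P, C 7 2831, P, C 43 461,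 C 79 251, C 7 2833, C 83 239, P, P, C 89 223, C 23 863, P, C 7 2837, P, P, C 31 641, C 7 2839, C 11 1807]"
definition Q52 :: "nat list" where "Q52 = [19507, 19531, 19541, 19543, 19553, 19559, 19571, 19577, 19583, 19597, 19603, 19609, 19661, 19681, 19687, 19697, 19699, 19709, 19717, 19727, 19739, 19751, 19753, 19759, 19763, 19777, 19793, 19801, 19813, 19819, 19841, 19843, 19853, 19861, 19867]"
lemma run52: "run 19507 [4, 2, 4, 2, 4, 6, 2] E52 Q52 = Some (19879, [4, 6, 2])"
  by (simp add: E52_def Q52_def)
lemma lb52: "lb Q52 15130559291211379 27820 = (9298349919912756, 28320)"
  by (simp add: Q52_def)
lemma len52: "length Q52 = 35"
  by (simp add: Q52_def)

definition E53 :: "ent list" where "E53 = [C 103 193, C 59 337, P, P, C 101 197, C 7 2843, C 13 1531, C 17 1171, C 43 463, P, P, C 11 1811, P, C 19 1049, C 31 643, P, C 127 157, C 7 2849, P, C 71 281, C 7 2851, P, P, C 41 487, C 19 1051, P, P, C 13 1537, C 11 1817, P, P, P, C 7 2857, C 83 241, C 11 1819, P, C 37 541, P, P, C 7 2861, P, C 13 1541, C 29 691, C 7 2863, P, P, C 11 1823, C 31 647, C 13 1543, P, C 7 2867, P, C 17 1181, C 43 467, C 7 2869, C 53 379, P, C 71 283, C 101 199, P, P, C 7 2873, P, P, C 11 1829, P, P, C 41 491, C 13 1549, C 11 1831, P, P, P, C 7 2879, C 19 1061, P, C 7 2881, C 23 877, P, P, C 17 1187, P, C 13 1553, C 61 331,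 C 19 1063, P, C 89 227, C 11 1837, C 7 2887, C 17 1189, P, C 73 277, C 113 179, P, P, C 7 2891, C 37 547, C 31 653, P, C 7 2893]"
definition Q53 :: "nat list" where "Q53 = [19889, 19891, 19913, 19919, 19927, 19937, 19949, 19961, 19963, 19973, 19979, 19991, 19993, 19997, 20011, 20021, 20023, 20029, 20047, 20051, 20063, 20071, 20089, 20101, 20107, 20113, 20117, 20123, 20129, 20143, 20147, 20149, 20161, 20173, 20177, 20183, 20201, 20219, 20231, 20233, 20249]"
lemma run53: "run 19879 [4, 6, 2] E53 Q53 = Some (20257, [4, 2, 4, 2, 4, 6, 2])"
  by (simp add: E53_def Q53_def)
lemma lb53: "lb Q53 9298349919912756 28320 = (589258334976506760, 28900)"
  by (simp add: Q53_def)
lemma len53: "length Q53 = 41"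
  by (simp add: Q53_def)

definition E54 :: "ent list" where "E54 = [C 47 431, P, C 23 881, C 13 1559, P, C 11 1843, C 7 2897, C 17 1193, P, C 103 197, C 7 2899, P, C 53 383, C 79 257, C 23 883, C 19 1069, C 11 1847, C 7 2903, P, P, C 29 701, P, C 11 1849, P, P, C 47 433, P, P, P, C 7 2909, P, C 13 1567, C 7 2911, C 89 229, C 11 1853, C 19 1073, P, P, P, C 23 887, P, P, C 137 149, C 17 1201, C 7 2917, C 13 1571, C 31 659, P, C 107 191, P, P, C 7 2921, C 11 1859, C 113 181, C 41 499, C 7 2923, C 97 211, C 11 1861, C 59 347, P, P, P, C 7 2927, C 31 661, C 103 199, C 13 1577, C 7 2929, P, P, C 73 281, C 17 1207, P, C 13 1579, C 7 2933, P, C 11 1867, C 19 1081, P, P, P, C 61 337, C 29 709, P, C 131 157, C 67 307, C 7 2939, C 13 1583, C 11 1871, C 7 2941, C 59 349, P, C 43 479, P, C 11 1873, C 37 557, P, C 53 389, C 17 1213, C 41 503, P]"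
definition Q54 :: "nat list" where "Q54 = [20261, 20269, 20287, 20297, 20323, 20327, 20333, 20341, 20347, 20353, 20357, 20359, 20369, 20389, 20393, 20399, 20407, 20411, 20431, 20441, 20443, 20477, 20479, 20483, 20507, 20509, 20521, 20533, 20543, 20549, 20551, 20563, 20593, 20599, 20611, 20627]"
lemma run54: "run 20257 [4, 2, 4, 2, 4, 6, 2] E54 Q54 = Some (20629, [4, 6, 2])"
  by (simp add: E54_def Q54_def)
lemma lb54: "lb Q54 589258334976506760 28900 = (25613050577384918, 29420)"
  by (simp add: Q54_def)
lemma len54: "length Q54 = 36"
  by (simp add: Q54_def)

definition E55 :: "ent list" where "E55 = [C 7 2947, C 47 439, P, P, C 11 1877, C 107 193, C 19 1087, C 7 2951, C 73 283, P, C 11 1879, C 7 2953, C 23 899, P, C 13 1591, C 137 151, C 17 1217, P, C 7 2957, C 127 163, P, C 139 149, C 7 2959, P, P, C 17 1219, C 19 1091, P, C 89 233, C 7 2963, P, P, P, P, P, C 13 1597, C 19 1093, P, P, C 79 263, C 11 1889, C 7 2969, P, C 17 1223, C 7 2971, C 11 1891, C 71 293, P, P, C 13 1601, C 109 191, C 47 443, C 59 353, C 37 563, C 83 251, C 67 311, C 7 2977, C 19 1097, P, C 29 719, P, C 23 907, C 31 673, C 7 2981, C 41 509, P, P, C 7 2983, P, C 13 1607, C 17 1229, P, P, P, C 7 2987, C 11 1901, C 13 1609, P, C 7 2989, C 17 1231, P, C 11 1903, P, C 43 487, P, C 7 2993, C 23 911, C 19 1103, P, P, C 13 1613, C 67 313,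 C 11 1907, P, P, C 31 677, C 139 151, C 7 2999, C 11 1909, P]"
definition Q55 :: "nat list" where "Q55 = [20639, 20641, 20663, 20681, 20693, 20707, 20717, 20719, 20731, 20743, 20747, 20749, 20753, 20759, 20771, 20773, 20789, 20807, 20809, 20849, 20857, 20873, 20879, 20887, 20897, 20899, 20903, 20921, 20929, 20939, 20947, 20959, 20963, 20981, 20983, 21001]"
lemma run55: "run 20629 [4, 6, 2] E55 Q55 = Some (21007, [4, 2, 4, 2, 4, 6, 2])"
  by (simp add: E55_def Q55_def)
lemma lb55: "lb Q55 25613050577384918 29420 = (2181518307775025, 29940)"
  by (simp add: Q55_def)
lemma len55: "length Q55 = 36"
  by (simp add: Q55_def)

definition E56 :: "ent list" where "E56 = [C 7 3001, P, P, P, P, P, C 17 1237, P, C 109 193, C 53 397, C 11 1913, C 13 1619, C 7 3007, C 37 569, P, P, P, C 19 1109, C 13 1621, C 7 3011, C 107 197, C 29 727, P, C 7 3013, C 17 1241, P, C 47 449, P, C 11 1919, C 43 491, C 7 3017, P, C 37 571, C 11 1921, C 7 3019, C 23 919, P, P, P, C 13 1627, P, C 7 3023, P, C 61 347, P, C 31 683, P, C 59 359, P, P, P, C 11 1927, C 17 1247, C 7 3029, C 127 167, P, C 7 3031, P, C 19 1117, P, C 13 1633, C 17 1249, C 67 317, C 11 1931, P, C 79 269, C 53 401, C 29 733, C 7 3037, C 11 1933, P, C 89 239, P, C 13 1637, P, C 7 3041, C 61 349, C 107 199, C 19 1121, C 7 3043, C 11 1937, C 101 211, P, P, P, P, C 7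 3047, C 83 257, C 19 1123, P, C 7 3049, P, C 37 577, C 131 163, C 13 1643, C 41 521, C 23 929, C 7 3053, C 11 1943, P]"
definition Q56 :: "nat list" where "Q56 = [21011, 21013, 21017, 21019, 21023, 21031, 21059, 21061, 21067, 21089, 21101, 21107, 21121, 21139, 21143, 21149, 21157, 21163, 21169, 21179, 21187, 21191, 21193, 21211, 21221, 21227, 21247, 21269, 21277, 21283, 21313, 21317, 21319, 21323, 21341, 21347, 21377]"
lemma run56: "run 21007 [4, 2, 4, 2, 4, 6, 2] E56 Q56 = Some (21379, [4, 6, 2])"
  by (simp add: E56_def Q56_def)
lemma lb56: "lb Q56 2181518307775025 29940 = (6879104135877, 30480)"
  by (simp add: Q56_def)
lemma len56: "length Q56 = 37"
  by (simp add: Q56_def)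

definition E57 :: "ent list" where "E57 = [P, P, C 73 293, P, P, P, C 17 1259, P, C 79 271, C 7 3059, P, C 31 691, C 7 3061, C 29 739, P, C 13 1649, C 11 1949, C 41 523, C 89 241, C 19 1129, C 43 499, C 11 1951, C 13 1651, P, C 7 3067, C 109 197, C 47 457, P, P, P, P, C 7 3071, P, P, C 137 157, C 7 3073, P, P, P, C 11 1957, P, C 61 353, C 7 3077, C 13 1657, C 29 743, C 23 937, C 7 3079, P, P, P, P, C 11 1961, P, C 7 3083, C 113 191, P, P, C 11 1963, P, P, C 17 1271, P, P, P, C 13 1663, C 7 3089, C 43 503, C 97 223, C 7 3091, C 17 1273, C 23 941, P, P, C 59 367, C 11 1969, P, C 47 461, C 13 1667, P, C 53 409, C 7 3097, P, C 23 943, C 109 199, C 13 1669, P, C 11 1973, C 7 3101, C 17 1277, P, C 37 587, C 7 3103, P, C 31 701, C 103 211, P, P, C 17 1279, C 7 3107, P]"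
definition Q57 :: "nat list" where "Q57 = [21379, 21383, 21391, 21397, 21401, 21407, 21419, 21433, 21467, 21481, 21487, 21491, 21493, 21499, 21503, 21517, 21521, 21523, 21529, 21557, 21559, 21563, 21569, 21577, 21587, 21589, 21599, 21601, 21611, 21613, 21617, 21647, 21649, 21661, 21673, 21683, 21701, 21713, 21727, 21737, 21739, 21751]"
lemma run57: "run 21379 [4, 6, 2] E57 Q57 = Some (21757, [4, 2, 4, 2, 4, 6, 2])"
  by (simp add: E57_def Q57_def)
lemma lb57: "lb Q57 6879104135877 30480 = (170225651860856, 31080)"
  by (simp add: Q57_def)
lemma len57: "length Q57 = 42"
  by (simp add: Q57_def)

definition E58 :: "ent list" where "E58 = [P, C 47 463, C 7 3109, P, C 11 1979, P, C 29 751, C 23 947, P, C 7 3113, C 19 1147, C 71 307, P, P, C 113 193, C 17 1283, P, P, C 139 157, C 13 1679, C 83 263, C 7 3119, P, P, C 7 3121, P, C 13 1681, C 11 1987, P, P, C 19 1151, P, C 131 167, P, C 79 277, C 43 509, C 7 3127, P, C 61 359, C 11 1991, C 19 1153, P, C 17 1289, C 7 3131, C 23 953, C 11 1993, P, C 7 3133, P, C 37 593, P, C 17 1291, C 47 467, C 29 757, C 7 3137, P, C 11 1997, C 127 173, C 7 3139, P, C 31 709, C 13 1691, C 11 1999, P, P, C 7 3143, P, C 59 373, C 13 1693, P, C 97 227, C 19 1159, P, P, C 11 2003, P, P, C 7 3149, C 17 1297, P, C 7 3151, C 13 1697, P, P, C 29 761, P, P, C 71 311, C 13 1699, P, P, C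 19 1163, C 7 3157, C 23 961, P, P, C 17 1301, C 11 2011, P, C 7 3161]"
definition Q58 :: "nat list" where "Q58 = [21757, 21767, 21773, 21787, 21799, 21803, 21817, 21821, 21839, 21841, 21851, 21859, 21863, 21871, 21881, 21893, 21911, 21929, 21937, 21943, 21961, 21977, 21991, 21997, 22003, 22013, 22027, 22031, 22037, 22039, 22051, 22063, 22067, 22073, 22079, 22091, 22093, 22109, 22111, 22123]"
lemma run58: "run 21757 [4, 2, 4, 2, 4, 6, 2] E58 Q58 = Some (22129, [4, 6, 2])"
  by (simp add: E58_def Q58_def)
lemma lb58: "lb Q58 170225651860856 31080 = (19425302430109, 31660)"
  by (simp add: Q58_def)
lemma len58: "length Q58 = 40"
  by (simp add: Q58_def)

definition E59 :: "ent list" where "E59 = [P, P, C 13 1703, C 7 3163, P, C 17 1303, P, P, P, C 37 599, C 7 3167, P, C 67 331, C 41 541, C 7 3169, C 11 2017, P, P, C 79 281, C 149 149, C 53 419, C 7 3173, C 97 229, C 13 1709, C 17 1307, C 71 313, P, C 11 2021, C 37 601, C 23 967, C 13 1711, P, C 19 1171, C 7 3179, P, C 113 197, C 7 3181, P, P, P, P, P, C 31 719, P, C 11 2027, C 29 769, P, P, C 7 3187, C 53 421, C 11 2029, C 13 1717, C 83 269, C 137 163, C 23 971, C 7 3191, C 89 251, P, P, C 7 3193, C 79 283, C 59 379, C 11 2033, P, P, C 13 1721, C 7 3197, P, C 61 367, P, C 7 3199, P, C 13 1723, C 43 521, P, C 73 307, C 29 773, C 7 3203, C 17 1319, C 41 547,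 C 11 2039, P, C 19 1181, P, P, C 11 2041, P, C 17 1321, C 37 607, C 7 3209, P, C 23 977, C 7 3211, P, P, C 113 199, C 43 523, C 83 271, C 149 151, P]"
definition Q59 :: "nat list" where "Q59 = [22129, 22133, 22147, 22153, 22157, 22159, 22171, 22189, 22193, 22229, 22247, 22259, 22271, 22273, 22277, 22279, 22283, 22291, 22303, 22307, 22343, 22349, 22367, 22369, 22381, 22391, 22397, 22409, 22433, 22441, 22447, 22453, 22469, 22481, 22483, 22501]"
lemma run59: "run 22129 [4, 6, 2] E59 Q59 = Some (22507, [4, 2, 4, 2, 4, 6, 2])"
  by (simp add: E59_def Q59_def)
lemma lb59: "lb Q59 19425302430109 31660 = (19889878240167, 32180)"
  by (simp add: Q59_def)
lemma len59: "length Q59 = 36"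
  by (simp add: Q59_def)

definition E60 :: "ent list" where "E60 = [C 71 317, P, C 47 479, C 11 2047, C 7 3217, C 101 223, C 13 1733, P, C 31 727, P, P, C 7 3221, P, C 19 1187, C 17 1327, C 7 3223, P, P, P, C 107 211, C 67 337, C 11 2053, C 7 3227, C 19 1189, C 59 383, C 97 233, C 7 3229, C 13 1739, C 23 983, P, P, P, C 11 2057, C 7 3233, C 13 1741, P, P, P, C 11 2059, P, C 139 163, C 17 1333, C 131 173, C 19 1193, P, C 7 3239, P, C 37 613, C 7 3241, P, C 11 2063, P, P, C 73 311, P, C 13 1747, P, P, C 31 733, P, C 7 3247, C 127 179, P, P, C 23 989, P, C 61 373, C 7 3251, C 11 2069, C 13 1751, P, C 7 3253, P, C 11 2071, P, P, C 13 1753, C 23 991, C 7 3257, C 151 151, P, P, C 7 3259, P, C 19 1201, C 29 787, C 37 617, C 17 1343, C 41 557, C 7 3263, C 53 431, C 11 2077, C 73 313, P, P, P, C 13 1759, P, C 89 257, P]"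
definition Q60 :: "nat list" where "Q60 = [22511, 22531, 22541, 22543, 22549, 22567, 22571, 22573, 22613, 22619, 22621, 22637, 22639, 22643, 22651, 22669, 22679, 22691, 22697, 22699, 22709, 22717, 22721, 22727, 22739, 22741, 22751, 22769, 22777, 22783, 22787, 22807, 22811, 22817, 22853, 22859, 22861, 22871, 22877]"
lemma run60: "run 22507 [4, 2, 4, 2, 4, 6, 2] E60 Q60 = Some (22879, [4, 6, 2])"
  by (simp add: E60_def Q60_def)
lemma lb60: "lb Q60 19889878240167 32180 = (402857300344206, 32740)"
  by (simp add: Q60_def)
lemma len60: "length Q60 = 39"
  by (simp add: Q60_def)

definition E61 :: "ent list" where "E61 = [C 137 167, C 7 3269, C 47 487, C 11 2081, C 7 3271, P, C 37 619, P, C 31 739, C 11 2083, C 13 1763, P, C 101 227, C 23 997, C 17 1349, P, C 7 3277, P, C 53 433, C 59 389, C 11 2087, P, P, C 7 3281, C 103 223, P, C 11 2089, C 7 3283, C 127 181, C 83 277, P, C 13 1769, C 109 211, P, C 7 3287, P, P, P, C 7 3289, P, P, C 31 743, P, P, C 19 1213, C 7 3293, P, P, P, P, C 17 1357, P, C 47 491, P, C 41 563, P, C 11 2099, C 7 3299, P, C 13 1777, C 7 3301, C 11 2101, C 29 797, P, C 61 379, C 19 1217, C 101 229, P, C 17 1361, C 73 317, P, C 79 293, C 7 3307, C 13 1781, P, C 19 1219, P, C 17 1363, P, C 7 3311, C 13 1783, C 97 239, P, C 7 3313, P, P, P, C 23 1009, P, C 139 167, C 7 3317, C 11 2111, P,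 C 13 1787, C 7 3319, C 19 1223, C 17 1367, C 11 2113, C 67 347, P]"
definition Q61 :: "nat list" where "Q61 = [22901, 22907, 22921, 22937, 22943, 22961, 22963, 22973, 22993, 23003, 23011, 23017, 23021, 23027, 23029, 23039, 23041, 23053, 23057, 23059, 23063, 23071, 23081, 23087, 23099, 23117, 23131, 23143, 23159, 23167, 23173, 23189, 23197, 23201, 23203, 23209, 23227, 23251]"
lemma run61: "run 22879 [4, 6, 2] E61 Q61 = Some (23257, [4, 2, 4, 2, 4, 6, 2])"
  by (simp add: E61_def Q61_def)
lemma lb61: "lb Q61 402857300344206 32740 = (698137835238706226, 33280)"
  by (simp add: Q61_def)
lemma len61: "length Q61 = 38"
  by (simp add: Q61_def)

definition E62 :: "ent list" where "E62 = [C 13 1789, C 7 3323, C 43 541, C 53 439, P, C 17 1369, P, C 31 751, C 11 2117, P, P, P, C 23 1013, C 7 3329, C 11 2119, P, C 7 3331, P, C 83 281, P, C 41 569, P, P, C 17 1373, C 37 631, C 19 1229, C 11 2123, P, C 7 3337, C 61 383, P, P, C 97 241, C 103 227, C 67 349, C 7 3341, C 19 1231, C 149 157, P, C 7 3343, C 89 263, C 41 571, C 13 1801, P, C 11 2129, C 59 397, C 7 3347, P, C 23 1019, C 11 2131, C 7 3349, P, C 131 179, C 47 499, P, C 29 809, C 31 757, C 7 3353, P, C 17 1381, C 53 443, C 23 1021, C 83 283, C 13 1807, P, C 71 331, C 19 1237, C 11 2137, P, C 7 3359, C 29 811, C 43 547, C 7 3361, P, C 101 233, P, P, C 13 1811,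 P, C 11 2141, P, P, P, P, C 7 3367, C 11 2143, C 17 1387, P, C 103 229, C 31 761, P, C 7 3371, P, P, P, C 7 3373, C 11 2147, C 13 1817, P, P]"
definition Q62 :: "nat list" where "Q62 = [23269, 23279, 23291, 23293, 23297, 23311, 23321, 23327, 23333, 23339, 23357, 23369, 23371, 23399, 23417, 23431, 23447, 23459, 23473, 23497, 23509, 23531, 23537, 23539, 23549, 23557, 23561, 23563, 23567, 23581, 23593, 23599, 23603, 23609, 23623, 23627]"
lemma run62: "run 23257 [4, 2, 4, 2, 4, 6, 2] E62 Q62 = Some (23629, [4, 6, 2])"
  by (simp add: E62_def Q62_def)
lemma lb62: "lb Q62 698137835238706226 33280 = (4139164536541, 33820)"
  by (simp add: Q62_def)
lemma len62: "length Q62 = 36"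
  by (simp add: Q62_def)

definition E63 :: "ent list" where "E63 = [P, P, C 7 3377, C 47 503, C 13 1819, C 67 353, C 7 3379, C 41 577, C 59 401, P, P, P, P, C 7 3383, C 11 2153, P, P, C 19 1247, C 13 1823, C 137 173, C 151 157, C 131 181, C 23 1031, C 37 641, P, C 7 3389, C 61 389, C 19 1249, C 7 3391, P, P, P, C 11 2159, P, C 23 1033, P, P, C 11 2161, P, C 13 1829, C 7 3397, C 17 1399, P, C 37 643, C 53 449, P, C 13 1831, C 7 3401, C 29 821, P, P, C 7 3403, P, P, P, C 11 2167, C 31 769, C 113 211, C 7 3407, C 17 1403, P, C 107 223, C 7 3409, C 29 823, P, P, P, C 11 2171, P, C 7 3413, P, C 23 1039, P, C 11 2173, P, P, P, C 19 1259, C 47 509, C 71 337, P, C 7 3419, C 37 647, C 89 269, C 7 3421, C 43 557, C 17 1409, P, C 13 1843, C 31 773, C 11 2179, P, P, P, C 29 827, C 17 1411, C 7 3427, P, C 103 233, P]"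
definition Q63 :: "nat list" where "Q63 = [23629, 23633, 23663, 23669, 23671, 23677, 23687, 23689, 23719, 23741, 23743, 23747, 23753, 23761, 23767, 23773, 23789, 23801, 23813, 23819, 23827, 23831, 23833, 23857, 23869, 23873, 23879, 23887, 23893, 23899, 23909, 23911, 23917, 23929, 23957, 23971, 23977, 23981, 23993, 24001]"
lemma run63: "run 23629 [4, 6, 2] E63 Q63 = Some (24007, [4, 2, 4, 2, 4, 6, 2])"
  by (simp add: E63_def Q63_def)
lemma lb63: "lb Q63 4139164536541 33820 = (12470390286578, 34400)"
  by (simp add: Q63_def)
lemma len63: "length Q63 = 40"
  by (simp add: Q63_def)

definition E64 :: "ent list" where "E64 = [P, C 13 1847, C 11 2183, C 7 3431, P, P, P, C 7 3433, C 13 1849, C 29 829, P, C 139 173, P, C 67 359, C 7 3437, P, C 41 587, P, C 7 3439, P, C 11 2189, P, C 13 1853, P, P, C 7 3443, P, P, P, P, C 89 271, P, C 23 1049, C 59 409, P, P, C 101 239, C 7 3449, C 19 1271, P, C 7 3451, C 37 653, C 73 331, C 11 2197, P, C 23 1051, P, P, C 19 1273, C 17 1423, C 13 1861, P, C 7 3457, P, C 43 563, C 11 2201, C 61 397, C 53 457, P, C 7 3461, P, C 11 2203, P, C 7 3463, P, P, C 79 307, C 127 191, C 17 1427, C 19 1277, C 7 3467, C 13 1867, C 11 2207, P, C 7 3469, C 149 163, C 107 227, C 17 1429, C 11 2209, C 19 1279, C 109 223, C 7 3473, C 41 593, P, C 83 293, C 13 1871, P, C 29 839, P, C 101 241, C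 11 2213, C 97 251, C 13 1873, C 7 3479, P, C 17 1433, C 7 3481, P, P, C 19 1283]"
definition Q64 :: "nat list" where "Q64 = [24007, 24019, 24023, 24029, 24043, 24049, 24061, 24071, 24077, 24083, 24091, 24097, 24103, 24107, 24109, 24113, 24121, 24133, 24137, 24151, 24169, 24179, 24181, 24197, 24203, 24223, 24229, 24239, 24247, 24251, 24281, 24317, 24329, 24337, 24359, 24371, 24373]"
lemma run64: "run 24007 [4, 2, 4, 2, 4, 6, 2] E64 Q64 = Some (24379, [4, 6, 2])"
  by (simp add: E64_def Q64_def)
lemma lb64: "lb Q64 12470390286578 34400 = (5218066022407, 34940)"
  by (simp add: Q64_def)
lemma len64: "length Q64 = 37"
  by (simp add: Q64_def)

definition E65 :: "ent list" where "E65 = [P, C 37 659, C 29 841, P, C 31 787, C 13 1877, C 23 1061, P, C 7 3487, P, P, P, C 13 1879, C 11 2221, C 53 461, C 7 3491, P, P, C 23 1063, C 7 3493, C 37 661, C 61 401, C 17 1439, C 43 569, P, P, C 7 3497, P, C 47 521, C 19 1289, C 7 3499, C 11 2227, P, C 107 229, P, C 127 193, P, C 7 3503, C 137 179, P, C 19 1291, P, C 53 463, C 11 2231, P, P, C 43 571, C 13 1889, C 41 599, C 7 3509, C 79 311, P, C 7 3511, C 47 523, C 13 1891, C 23 1069, C 67 367, P, C 17 1447, C 73 337, C 11 2237, P, C 151 163, C 103 239, C 7 3517, P, C 11 2239, P, C 71 347, C 41 601, C 19 1297, C 7 3521, C 157 157, C 89 277, P, C 7 3523, C 17 1451, P, C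 11 2243, P, C 23 1073, P, C 7 3527, P, P, C 17 1453, C 7 3529, C 31 797, P, C 13 1901, C 19 1301, C 59 419, C 79 313, C 7 3533, P, C 29 853, C 11 2249, C 109 227, P, C 53 467]"
definition Q65 :: "nat list" where "Q65 = [24379, 24391, 24407, 24413, 24419, 24421, 24439, 24443, 24469, 24473, 24481, 24499, 24509, 24517, 24527, 24533, 24547, 24551, 24571, 24593, 24611, 24623, 24631, 24659, 24671, 24677, 24683, 24691, 24697, 24709, 24733, 24749]"
lemma run65: "run 24379 [4, 6, 2] E65 Q65 = Some (24757, [4, 2, 4, 2, 4, 6, 2])"
  by (simp add: E65_def Q65_def)
lemma lb65: "lb Q65 5218066022407 34940 = (533666647587669, 35400)"
  by (simp add: Q65_def)
lemma len65: "length Q65 = 32"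
  by (simp add: Q65_def)

definition E66 :: "ent list" where "E66 = [C 19 1303, C 11 2251, P, P, C 17 1457, C 7 3539, C 71 349, P, C 7 3541, C 13 1907, P, C 137 181, P, C 17 1459, P, C 43 577, C 13 1909, P, C 103 241, C 11 2257, C 7 3547, C 19 1307, C 59 421, P, P, P, C 29 857, C 7 3551, P, C 23 1081, C 13 1913, C 7 3553, P, C 139 179, C 149 167, C 41 607, P, C 11 2263, C 7 3557, C 37 673, P, C 29 859, C 7 3559, P, P, P, C 97 257, C 107 233, C 11 2267, C 7 3563, P, C 13 1919, C 61 409, P, C 11 2269, C 109 229, P, P, C 13 1921, P, P, C 7 3569, P, C 67 373, C 7 3571, C 23 1087, C 11 2273, C 17 1471, C 89 281, P, C 127 197, C 131 191, C 29 863, P, P, P, C 7 3577, C 79 317, C 37 677, C 13 1927, P, C 19 1319, C 71 353, C 7 3581, C 11 2279, P, C 31 809, C 7 3583, P, C 11 2281, C 23 1091, P, C 19 1321, C 13 1931, C 7 3587, P, P, P, C 7 3589, P]"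
definition Q66 :: "nat list" where "Q66 = [24763, 24767, 24781, 24793, 24799, 24809, 24821, 24841, 24847, 24851, 24859, 24877, 24889, 24907, 24917, 24919, 24923, 24943, 24953, 24967, 24971, 24977, 24979, 24989, 25013, 25031, 25033, 25037, 25057, 25073, 25087, 25097, 25111, 25117, 25121, 25127]"
lemma run66: "run 24757 [4, 2, 4, 2, 4, 6, 2] E66 Q66 = Some (25129, [4, 6, 2])"
  by (simp add: E66_def Q66_def)
lemma lb66: "lb Q66 533666647587669 35400 = (30435193881788365, 35920)"
  by (simp add: Q66_def)
lemma len66: "length Q66 = 36"
  by (simp add: Q66_def)

definition E67 :: "ent list" where "E67 = [C 13 1933, C 41 613, C 23 1093, C 31 811, P, C 7 3593, P, C 11 2287, C 139 181, P, P, P, C 17 1481, C 13 1937, P, C 89 283, P, C 7 3599, C 113 223, C 11 2291, C 7 3601, C 17 1483, C 19 1327, C 151 167, P, C 11 2293, P, C 23 1097, P, C 43 587, P, P, C 7 3607, P, C 13 1943, P, C 11 2297, C 37 683, C 127 199, C 7 3611, C 17 1487, C 131 193, C 11 2299, C 7 3613, C 41 617, P, P, P, P, C 17 1489, C 7 3617, P, C 19 1333, C 73 347, C 7 3619, C 13 1949, P, P, P, C 101 251, P, C 7 3623, C 13 1951, P, C 23 1103, P, C 41 619, C 17 1493, C 53 479, P, C 67 379, C 109 233, C 11 2309, C 7 3629, P, P, C 7 3631, C 11 2311, P, C 47 541, C 59 431, C 29 877, P, C 13 1957, P, C 31 821, P, P, C 7 3637, P, P, P, C 73 349, C 83 307,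 C 17 1499, C 7 3641, C 71 359, C 13 1961, C 43 593, C 7 3643]"
definition Q67 :: "nat list" where "Q67 = [25147, 25153, 25163, 25169, 25171, 25183, 25189, 25219, 25229, 25237, 25243, 25247, 25253, 25261, 25301, 25303, 25307, 25309, 25321, 25339, 25343, 25349, 25357, 25367, 25373, 25391, 25409, 25411, 25423, 25439, 25447, 25453, 25457, 25463, 25469, 25471]"
lemma run67: "run 25129 [4, 6, 2] E67 Q67 = Some (25507, [4, 2, 4, 2, 4, 6, 2])"
  by (simp add: E67_def Q67_def)
lemma lb67: "lb Q67 30435193881788365 35920 = (2812555274694, 36460)"
  by (simp add: Q67_def)
lemma len67: "length Q67 = 36"
  by (simp add: Q67_def)

definition E68 :: "ent list" where "E68 = [C 23 1109, C 97 263, C 31 823, C 17 1501, C 13 1963, P, C 7 3647, C 11 2321, P, P, C 7 3649, C 59 433, C 29 881, C 11 2323, C 61 419, P, C 37 691, C 7 3653, C 107 239, P, P, P, P, C 157 163, C 11 2327, P, P, C 29 883, P, C 7 3659, C 11 2329, P, C 7 3661, C 19 1349, P, C 31 827, P, P, C 13 1973, C 113 227, P, C 67 383, C 11 2333, P, C 7 3667, P]"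
definition Q68 :: "nat list" where "Q68 = [25523, 25537, 25541, 25561, 25577, 25579, 25583, 25589, 25601, 25603, 25609, 25621, 25633, 25639, 25643, 25657, 25667, 25673]"
lemma run68: "run 25507 [4, 2, 4, 2, 4, 6, 2] E68 Q68 = Some (25679, [2])"
  by (simp add: E68_def Q68_def)
lemma lb68: "lb Q68 2812555274694 36460 = (33901656473236, 36720)"
  by (simp add: Q68_def)
lemma len68: "length Q68 = 18"
  by (simp add: Q68_def)

definition CH :: "(ent list \<times> nat list) list" where
  "CH = [(E0, Q0), (E1, Q1), (E2, Q2), (E3, Q3), (E4, Q4), (E5, Q5), (E6, Q6), (E7, Q7), (E8, Q8), (E9, Q9), (E10, Q10), (E11, Q11), (E12, Q12), (E13, Q13), (E14, Q14), (E15, Q15), (E16, Q16), (E17, Q17), (E18, Q18), (E19, Q19), (E20, Q20), (E21, Q21), (E22, Q22), (E23, Q23), (E24, Q24), (E25, Q25), (E26, Q26), (E27, Q27), (E28, Q28), (E29, Q29), (E30, Q30), (E31, Q31), (E32, Q32), (E33, Q33), (E34, Q34), (E35, Q35), (E36, Q36), (E37, Q37), (E38, Q38), (E39, Q39), (E40, Q40), (E41, Q41), (E42, Q42), (E43, Q43), (E44, Q44), (E45, Q45), (E46, Q46), (E47, Q47), (E48, Q48), (E49, Q49), (E50, Q50), (E51, Q51), (E52, Q52), (E53, Q53), (E54, Q54), (E55, Q55), (E56, Q56), (E57, Q57), (E58, Q58), (E59, Q59), (E60, Q60), (E61, Q61), (E62, Q62), (E63, Q63), (E64, Q64), (E65,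 Q65), (E66, Q66), (E67, Q67), (E68, Q68)]"

lemma chain_CH: "chain 7 [4, 2, 4, 2, 4, 6, 2] CH = Some (25679, [2])"
  by (simp add: CH_def run0 run1 run2 run3 run4 run5 run6 run7 run8 run9 run10 run11 run12 run13 run14 run15 run16 run17 run18 run19 run20 run21 run22 run23 run24 run25 run26 run27 run28 run29 run30 run31 run32 run33 run34 run35 run36 run37 run38 run39 run40 run41 run42 run43 run44 run45 run46 run47 run48 run49 run50 run51 run52 run53 run54 run55 run56 run57 run58 run59 run60 run61 run62 run63 run64 run65 run66 run67 run68)

lemma lb_CH: "lb ([2, 3, 5] @ concat (map snd CH)) 1 0 = (33901656473236, 36720)"
  by (simp add: CH_def lb_append lb0 lb1 lb2 lb3 lb4 lb5 lb6 lb7 lb8 lb9 lb10 lb11 lb12 lb13 lb14 lb15 lb16 lb17 lb18 lb19 lb20 lb21 lb22 lb23 lb24 lb25 lb26 lb27 lb28 lb29 lb30 lb31 lb32 lb33 lb34 lb35 lb36 lb37 lb38 lb39 lb40 lb41 lb42 lb43 lb44 lb45 lb46 lb47 lb48 lb49 lb50 lb51 lb52 lb53 lb54 lb55 lb56 lb57 lb58 lb59 lb60 lb61 lb62 lb63 lb64 lb65 lb66 lb67 lb68)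

lemma len_CH: "length (concat (map snd CH)) = 2825"
  by (simp add: CH_def len0 len1 len2 len3 len4 len5 len6 len7 len8 len9 len10 len11 len12 len13 len14 len15 len16 len17 len18 len19 len20 len21 len22 len23 len24 len25 len26 len27 len28 len29 len30 len31 len32 len33 len34 len35 len36 len37 len38 len39 len40 len41 len42 len43 len44 len45 len46 len47 len48 len49 len50 len51 len52 len53 len54 len55 len56 len57 len58 len59 len60 len61 len62 len63 len64 len65 len66 len67 len68)


lemma good_start: "good 7 [4, 2, 4, 2, 4, 6, 2]"
  unfolding good_def GG_def RR_def by (intro disjI1 exI[of _ 1]) simp

lemma prime_ge7_cand:
  fixes p :: nat
  assumes "prime p" "7 \<le> p"
  shows "cand p"
proof -
  have d: "\<And>d. d dvd p \<Longrightarrow> d = 1 \<or> d = p" using assms(1) by (simp add: prime_nat_iff)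
  show ?thesis unfolding cand_def using d[of 2] d[of 3] d[of 5] assms(2) by auto
qed

lemma prime_lt7:
  fixes p :: nat
  assumes "prime p" "p < 7"
  shows "p = 2 \<or> p = 3 \<or> p = 5"
proof -
  have d: "\<And>d. d dvd p \<Longrightarrow> d = 1 \<or> d = p" and g: "1 < p" using assms(1) by (simp_all add: prime_nat_iff)
  have "p = 2 \<or> p = 3 \<or> p = 4 \<or> p = 5 \<or> p = 6" using g assms(2) by arith
  moreover have "p \<noteq> 4" using d[of 2] by auto
  moreover have "p \<noteq> 6" using d[of 2] by auto
  ultimately show ?thesis by blast
qed

lemma numfact: "(8192::nat) ^ 2828 < 33901656473236 * 2 ^ 36720"
proof -
  have a: "(8192::nat) = 2 ^ 13" by simp
  have "(8192::nat) ^ 2828 = (2 ^ 13) ^ 2828" by (simp only: a)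
  also have "\<dots> = 2 ^ (13 * 2828)" by (simp only: power_mult)
  also have "(13 * 2828 :: nat) = 44 + 36720" by simp
  also have "(2::nat) ^ (44 + 36720) = 2 ^ 44 * 2 ^ 36720" by (rule power_add)
  also have "\<dots> < 33901656473236 * 2 ^ 36720"
  proof (rule mult_strict_right_mono)
    show "(2::nat) ^ 44 < 33901656473236" by simp
    show "(0::nat) < 2 ^ 36720" by (rule zero_less_power) simp
  qed
  finally show ?thesis .
qed

lemma key_T:
  obtains T :: "nat set" where "finite T" "card T = 2828"
    "\<And>p. prime p \<Longrightarrow> p \<le> 25678 \<Longrightarrow> p \<in> T"
    "\<And>x. x \<in> T \<Longrightarrow> x \<le> 25678"
    "(8192::nat) ^ 2828 < prod (\<lambda>x. x) T"
proof -
  define L where "L = concat (map snd CH)"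
  note C = chain_correct[OF chain_CH good_start]
  have L1: "\<forall>p\<in>set L. 7 \<le> p \<and> p < 25679" using C unfolding L_def by blast
  have L2: "sorted_wrt (<) L" using C unfolding L_def by blast
  have L3: "\<forall>m. 7 \<le> m \<longrightarrow> m < 25679 \<longrightarrow> prime m \<longrightarrow> cand m \<longrightarrow> m \<in> set L"
    using C unfolding L_def by blast
  define xs where "xs = [2, 3, 5] @ L"
  have sx: "sorted_wrt (<) xs"
    unfolding xs_def sorted_wrt_append using L1 L2 by fastforce
  then have dx: "distinct xs" by (simp add: strict_sorted_iff)
  have lx: "length xs = 2828" using len_CH unfolding xs_def L_def by simp
  define T where "T = set xs"
  have fT: "finite T" unfolding T_def by simp
  have cT: "card T = 2828" unfolding T_def using distinct_card[OF dx] lx by simp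
  have allp: "p \<in> T" if "prime p" "p \<le> 25678" for p
  proof (cases "p < 7")
    case True
    then show ?thesis using prime_lt7[OF that(1)] unfolding T_def xs_def by auto
  next
    case False
    then have "p \<in> set L" using L3 prime_ge7_cand[OF that(1)] that by simp
    then show ?thesis unfolding T_def xs_def by simp
  qed
  have Tle: "x \<le> 25678" if "x \<in> T" for x
  proof -
    have "x \<in> {2, 3, 5} \<or> x \<in> set L" using that unfolding T_def xs_def by auto
    then show ?thesis using L1 by fastforce
  qed
  have pT: "prod (\<lambda>x. x) T = prod_list xs"
    unfolding T_def using prod.distinct_set_conv_list[OF dx, of "\<lambda>x. x"] by simp
  have lbx: "lb xs 1 0 = (33901656473236, 36720)" using lb_CH unfolding xs_def L_def .
  have "33901656473236 * 2 ^ 36720 \<le> 1 * 2 ^ 0 * prod_list xs"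
    using lb_correct[OF lbx] .
  then have "33901656473236 * 2 ^ 36720 \<le> prod_list xs" by (simp only: mult_1 power_0)
  then have Tp: "(8192::nat) ^ 2828 < prod (\<lambda>x. x) T"
    unfolding pT using numfact by (rule_tac less_le_trans) assumption+
  show ?thesis using that[OF fT cT allp Tle Tp] .
qed

theorem lemma5p6:
  fixes M :: nat
  assumes "M > 0" and "omega M \<ge> 2828"
  shows "real (W M) < real M powr (1/13)"
proof -
  obtain T :: "nat set" where T: "finite T" "card T = 2828"
    "\<And>p. prime p \<Longrightarrow> p \<le> 25678 \<Longrightarrow> p \<in> T"
    "\<And>x. x \<in> T \<Longrightarrow> x \<le> 25678"
    "(8192::nat) ^ 2828 < prod (\<lambda>x. x) T"
    using key_T by blast
  have S: "finite (prime_factors M)" "\<And>p. p \<in> prime_factors M \<Longrightarrow> prime p"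
    "2828 \<le> card (prime_factors M)"
    using assms(2) by (auto simp: omega_def)
  have "(8192::nat) ^ card (prime_factors M) < prod (\<lambda>x. x) (prime_factors M)"
    by (rule prod_bound_general[OF T(1) T(2) T(3) T(4) _ _ T(5) S(1) S(2) S(3)]) simp_all
  also have "\<dots> \<le> M" by (rule prod_prime_factors_le[OF assms(1)])
  finally have "(8192::nat) ^ omega M < M" by (simp add: omega_def)
  then show ?thesis unfolding W_def by (rule final_step)
qed

end
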